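(* Let $\Pi_{\mathfrak l}\subset\Pi$ be admissible and let $\tau$ be an even permutation of $\Pi$ which is an automorphism of the Dynkin diagram and coincides with $-w_{\mathfrak l}$ on $\Pi_{\mathfrak l}$; extend $\tau$ linearly to $\mathfrak h^*$ and put $\tilde\mu=w_{\mathfrak l}\tau(\mu)$ for $\mu\in\bar\Pi_{\mathfrak l}$. Suppose $(\mu+\tilde\mu,\alpha)=0$ for all $\mu\in\bar\Pi_{\mathfrak l}$, $\alpha\in\Pi_{\mathfrak l}$. Then $\tau\circ w_{\mathfrak l}=w_{\mathfrak l}\circ\tau$ on the root lattice $\mathbb Z\Pi$.
   Context: Setting: $\mathfrak g$ is one of $\mathfrak{gl}(N|2\mathbf m)$, $\mathfrak{osp}(2\mathbf n+1|2\mathbf m)$, $\mathfrak{osp}(2\mathbf n|2\mathbf m)$, $\mathfrak{spo}(2\mathbf n|2\mathbf m)$ with natural module $V=\mathbb C^{N|2\mathbf m}$, homogeneous weight basis $v_1,\dots,v_{N+2\mathbf m}$ of weights $\zeta_1,\dots,\zeta_{N+2\mathbf m}$, $|v_i|=1$ iff $i\le\mathbf m$ or $i>\mathbf m+N$; $i'=N+2\mathbf m+1-i$; standard form $(\varepsilon_i,\varepsilon_j)=\delta_{ij}=-(\delta_i,\delta_j)$, $(\varepsilon_i,\delta_j)=0$ on $\mathfrak h^*$; standard simple roots $\Pi$ ($\delta_i-\delta_{i+1}$, $\delta_{\mathbf m}-\varepsilon_1$, $\varepsilon_i-\varepsilon_{i+1}$, then $\varepsilon_N-\delta_{\mathbf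 m+1},\dots,\delta_{2\mathbf m-1}-\delta_{2\mathbf m}$ for $\mathfrak{gl}$, or tail root $\varepsilon_{\mathbf n}$, $\varepsilon_{\mathbf n-1}+\varepsilon_{\mathbf n}$, $2\varepsilon_{\mathbf n}$ respectively); $\bar\Pi_{\mathfrak l}=\Pi\setminus\Pi_{\mathfrak l}$. An operator on $\mathfrak h^*$ is even if it maps even roots to even roots and odd to odd. For $\Pi_{\mathfrak l}\subset\Pi$, $\mathfrak l=\bigoplus_i\mathfrak l_i$ is generated by $e_{\pm\alpha}$, $\alpha\in\Pi_{\mathfrak l}$, $\mathfrak l_i$ acting naturally on the span of basis vectors $v_{j_1},\dots,v_{j_r}$ ($j_1<\dots<j_r$), $\hat{\mathfrak l}_i$ its $\mathfrak{gl}$-extension if of type A; $w_{\mathfrak l_i}$ is the linear operator $\zeta_{j_s}\mapsto\zeta_{j_{r+1-s}}$ fixing other $\zeta_j$ ($j,j'\notin\{j_1,..,j_r\}$), and $w_{\mathfrak l}=\prod_iw_{\mathfrak l_i}$. $\Pi_{\mathfrak l}$ is admissible if the grading induced on each span of $v_{j_1},\dots,v_{j_r}$ is symmetric ($|v_{j_s}|=|v_{j_{r+1-s}}|$) with minimal number of odd simple roots of $\hat{\mathfrak l}_i$ among symmetric gradings. *)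

theory Defs
  imports Complex_Main
begin

text \<open>
  Kinds: GL = gl(N|2m), B = osp(2n+1|2m), D = osp(2n|2m), C = spo(2n|2m).
  The parameter nn stands for N in the GL case and for n otherwise; mm is m.
  Elements of h^* are modelled as coordinate vectors nat => real: coordinate c
  is the coefficient of zeta_c for c in coords (zeta_1..zeta_(N+2m) for GL,
  zeta_1..zeta_(m+n) otherwise, these being delta_1..delta_m, epsilon_1,..).
\<close>

datatype kind = GL | B | D | C

definition dimN :: "kind \<Rightarrow> nat \<Rightarrow> nat" where
  "dimN k nn = (case k of GL \<Rightarrow> nn | B \<Rightarrow> 2*nn+1 | D \<Rightarrow> 2*nn | C \<Rightarrow> 2*nn)"

text \<open>number of basis vectors of V\<close>
definition tot :: "kind \<Rightarrow> nat \<Rightarrow> nat \<Rightarrow> nat" where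
  "tot k nn mm = dimN k nn + 2*mm"

text \<open>i' = N + 2m + 1 - i\<close>
definition prim :: "kind \<Rightarrow> nat \<Rightarrow> nat \<Rightarrow> nat \<Rightarrow> nat" where
  "prim k nn mm i = tot k nn mm + 1 - i"

text \<open>|v_i| = 1 iff i <= m or i > m + N\<close>
definition odd_idx :: "kind \<Rightarrow> nat \<Rightarrow> nat \<Rightarrow> nat \<Rightarrow> bool" where
  "odd_idx k nn mm i = (i \<le> mm \<or> mm + dimN k nn < i)"

text \<open>number of independent coordinates of h^*\<close>
definition rk :: "kind \<Rightarrow> nat \<Rightarrow> nat \<Rightarrow> nat" where
  "rk k nn mm = (if k = GL then tot k nn mm else mm + nn)"

definition coords :: "kind \<Rightarrow> nat \<Rightarrow> nat \<Rightarrow> nat set" where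
  "coords k nn mm = {1..rk k nn mm}"

definition unitv :: "nat \<Rightarrow> nat \<Rightarrow> real" where
  "unitv i = (\<lambda>c. if c = i then 1 else 0)"

definition vadd :: "(nat \<Rightarrow> real) \<Rightarrow> (nat \<Rightarrow> real) \<Rightarrow> nat \<Rightarrow> real" where
  "vadd x y = (\<lambda>c. x c + y c)"

definition vsmul :: "real \<Rightarrow> (nat \<Rightarrow> real) \<Rightarrow> nat \<Rightarrow> real" where
  "vsmul a x = (\<lambda>c. a * x c)"

definition vneg :: "(nat \<Rightarrow> real) \<Rightarrow> nat \<Rightarrow> real" where
  "vneg x = (\<lambda>c. - x c)"

definition vzero :: "nat \<Rightarrow> real" where
  "vzero = (\<lambda>c. 0)"

definition vsum :: "('i \<Rightarrow> nat \<Rightarrow> real) \<Rightarrow> 'i set \<Rightarrow> nat \<Rightarrow> real" where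
  "vsum f A = (\<lambda>c. \<Sum>i\<in>A. f i c)"

text \<open>The weights zeta_i of v_i (zeta_(i') = - zeta_i in the orthosymplectic cases,
  the middle weight of osp(2n+1|2m) being 0).\<close>
definition zeta :: "kind \<Rightarrow> nat \<Rightarrow> nat \<Rightarrow> nat \<Rightarrow> nat \<Rightarrow> real" where
  "zeta k nn mm i =
     (if k = GL then unitv i
      else if i \<le> mm + nn then unitv i
      else if prim k nn mm i \<le> mm + nn then vneg (unitv (prim k nn mm i))
      else vzero)"

text \<open>standard form: (eps_i,eps_j) = delta_ij = -(delta_i,delta_j), (eps,delta) = 0\<close>
definition form :: "kind \<Rightarrow> nat \<Rightarrow> nat \<Rightarrow> (nat \<Rightarrow> real) \<Rightarrow> (nat \<Rightarrow> real) \<Rightarrow> real" where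
  "form k nn mm x y =
     (\<Sum>c\<in>coords k nn mm. (if odd_idx k nn mm c then -1 else 1) * x c * y c)"

definition nsr :: "kind \<Rightarrow> nat \<Rightarrow> nat \<Rightarrow> nat" where
  "nsr k nn mm = (if k = GL then tot k nn mm - 1 else mm + nn)"

text \<open>simple root alpha_a, a = 1..nsr: zeta_a - zeta_(a+1), plus the tail root
  eps_n, eps_(n-1)+eps_n, 2 eps_n in the cases B, D, C.\<close>
definition simple :: "kind \<Rightarrow> nat \<Rightarrow> nat \<Rightarrow> nat \<Rightarrow> nat \<Rightarrow> real" where
  "simple k nn mm a =
     (if k \<noteq> GL \<and> a = mm + nn then
        (case k of B \<Rightarrow> zeta k nn mm (mm+nn)
           | D \<Rightarrow> vadd (zeta k nn mm (mm+nn-1)) (zeta k nn mm (mm+nn))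
           | C \<Rightarrow> vsmul 2 (zeta k nn mm (mm+nn))
           | GL \<Rightarrow> vzero)
      else vadd (zeta k nn mm a) (vneg (zeta k nn mm (a+1))))"

definition sr_idx :: "kind \<Rightarrow> nat \<Rightarrow> nat \<Rightarrow> nat set" where
  "sr_idx k nn mm = {1..nsr k nn mm}"

definition sr_odd :: "kind \<Rightarrow> nat \<Rightarrow> nat \<Rightarrow> nat \<Rightarrow> bool" where
  "sr_odd k nn mm a =
     (if k \<noteq> GL \<and> a = mm + nn then False
      else odd_idx k nn mm a \<noteq> odd_idx k nn mm (a+1))"

definition root_lattice :: "kind \<Rightarrow> nat \<Rightarrow> nat \<Rightarrow> (nat \<Rightarrow> real) set" where
  "root_lattice k nn mm =
     {vsum (\<lambda>a. vsmul (of_int (z a)) (simple k nn mm a)) (sr_idx k nn mm) | z :: nat \<Rightarrow> int. True}"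

definition dyn_edges :: "kind \<Rightarrow> nat \<Rightarrow> nat \<Rightarrow> nat set \<Rightarrow> (nat \<times> nat) set" where
  "dyn_edges k nn mm S =
     {(a,b). a \<in> S \<and> b \<in> S \<and> a \<noteq> b \<and> form k nn mm (simple k nn mm a) (simple k nn mm b) \<noteq> 0}"

text \<open>connected component of S containing a (the simple roots of l_i)\<close>
definition comp :: "kind \<Rightarrow> nat \<Rightarrow> nat \<Rightarrow> nat set \<Rightarrow> nat \<Rightarrow> nat set" where
  "comp k nn mm S a = {b \<in> S. (a, b) \<in> (dyn_edges k nn mm S)\<^sup>*}"

text \<open>Indices of the basis vectors touched by alpha_a (the two vectors of its gl(1|1) / gl(2)
  inside a type A component; the tail root of D touches v_(m+n-1) and v_((m+n)')).\<close>
definition sr_supp :: "kind \<Rightarrow> nat \<Rightarrow> nat \<Rightarrow> nat \<Rightarrow> nat set" where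
  "sr_supp k nn mm a =
     (if k \<noteq> GL \<and> a = mm + nn then
        (case k of D \<Rightarrow> {mm+nn-1, prim k nn mm (mm+nn)}
                 | _ \<Rightarrow> {mm+nn, prim k nn mm (mm+nn)})
      else {a, a+1})"

text \<open>A component is of orthosymplectic type if it contains the tail root (B, C) resp.
  both fork roots alpha_(m+n-1), alpha_(m+n) (D); otherwise it is of type A.\<close>
definition osp_comp :: "kind \<Rightarrow> nat \<Rightarrow> nat \<Rightarrow> nat set \<Rightarrow> bool" where
  "osp_comp k nn mm Cp =
     (case k of GL \<Rightarrow> False
        | D \<Rightarrow> mm+nn-1 \<in> Cp \<and> mm+nn \<in> Cp
        | _ \<Rightarrow> mm+nn \<in> Cp)"

text \<open>the index set {j_1 < ... < j_r} of the natural module of l_i\<close>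
definition jset :: "kind \<Rightarrow> nat \<Rightarrow> nat \<Rightarrow> nat set \<Rightarrow> nat set" where
  "jset k nn mm Cp =
     (if osp_comp k nn mm Cp then {Min Cp .. prim k nn mm (Min Cp)}
      else (\<Union>a\<in>Cp. sr_supp k nn mm a))"

definition jlist :: "kind \<Rightarrow> nat \<Rightarrow> nat \<Rightarrow> nat set \<Rightarrow> nat list" where
  "jlist k nn mm Cp = sorted_list_of_set (jset k nn mm Cp)"

text \<open>index map of w_(l_i): j_s |-> j_(r+1-s); in the orthosymplectic cases it is
  extended compatibly with zeta_(j') = - zeta_j; identity elsewhere.\<close>
definition wperm :: "kind \<Rightarrow> nat \<Rightarrow> nat \<Rightarrow> nat set \<Rightarrow> nat \<Rightarrow> nat" where
  "wperm k nn mm Cp j =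
     (let J = jset k nn mm Cp; js = jlist k nn mm Cp;
          rv = (\<lambda>i. js ! (length js - 1 - card {x\<in>J. x < i}))
      in if j \<in> J then rv j
         else if k \<noteq> GL \<and> prim k nn mm j \<in> J then prim k nn mm (rv (prim k nn mm j))
         else j)"

definition lin_of_perm :: "kind \<Rightarrow> nat \<Rightarrow> nat \<Rightarrow> (nat \<Rightarrow> nat) \<Rightarrow> (nat \<Rightarrow> real) \<Rightarrow> nat \<Rightarrow> real" where
  "lin_of_perm k nn mm \<sigma> x =
     vsum (\<lambda>c. vsmul (x c) (zeta k nn mm (\<sigma> c))) (coords k nn mm)"

text \<open>components represented by their minimal elements\<close>
definition comp_mins :: "kind \<Rightarrow> nat \<Rightarrow> nat \<Rightarrow> nat set \<Rightarrow> nat set" where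
  "comp_mins k nn mm S = {a \<in> S. a = Min (comp k nn mm S a)}"

definition w_l :: "kind \<Rightarrow> nat \<Rightarrow> nat \<Rightarrow> nat set \<Rightarrow> (nat \<Rightarrow> real) \<Rightarrow> nat \<Rightarrow> real" where
  "w_l k nn mm S =
     foldr (\<lambda>a f. lin_of_perm k nn mm (wperm k nn mm (comp k nn mm S a)) \<circ> f)
       (sorted_list_of_set (comp_mins k nn mm S)) id"

definition n_changes :: "bool list \<Rightarrow> nat" where
  "n_changes ps = card {i. Suc i < length ps \<and> ps ! i \<noteq> ps ! Suc i}"

definition par_seq :: "kind \<Rightarrow> nat \<Rightarrow> nat \<Rightarrow> nat set \<Rightarrow> bool list" where
  "par_seq k nn mm Cp = map (odd_idx k nn mm) (jlist k nn mm Cp)"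

text \<open>Pi_l admissible: for every component the induced grading is symmetric, and for a
  type A component (where hat l_i = gl(p|q)) the number of odd simple roots of hat l_i,
  i.e. of parity changes along v_(j_1),...,v_(j_r), is minimal among all symmetric
  gradings of gl(p|q).\<close>
definition admissible :: "kind \<Rightarrow> nat \<Rightarrow> nat \<Rightarrow> nat set \<Rightarrow> bool" where
  "admissible k nn mm S =
     (S \<subseteq> sr_idx k nn mm \<and>
      (\<forall>a\<in>S. let ps = par_seq k nn mm (comp k nn mm S a) in
         rev ps = ps \<and>
         (\<not> osp_comp k nn mm (comp k nn mm S a) \<longrightarrow>
            (\<forall>qs. length qs = length ps \<and> count_list qs True = count_list ps True \<and> rev qs = qs
                   \<longrightarrow> n_changes ps \<le> n_changes qs))))"

definition dynkin_aut :: "kind \<Rightarrow> nat \<Rightarrow> nat \<Rightarrow> (nat \<Rightarrow> nat) \<Rightarrow> bool" where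
  "dynkin_aut k nn mm \<tau> =
     (bij_betw \<tau> (sr_idx k nn mm) (sr_idx k nn mm) \<and>
      (\<forall>a\<in>sr_idx k nn mm. \<forall>b\<in>sr_idx k nn mm.
         form k nn mm (simple k nn mm (\<tau> a)) (simple k nn mm (\<tau> b))
           = form k nn mm (simple k nn mm a) (simple k nn mm b)))"

definition even_perm :: "kind \<Rightarrow> nat \<Rightarrow> nat \<Rightarrow> (nat \<Rightarrow> nat) \<Rightarrow> bool" where
  "even_perm k nn mm \<tau> = (\<forall>a\<in>sr_idx k nn mm. sr_odd k nn mm (\<tau> a) = sr_odd k nn mm a)"

definition valid_params :: "kind \<Rightarrow> nat \<Rightarrow> nat \<Rightarrow> bool" where
  "valid_params k nn mm = (case k of GL \<Rightarrow> 1 \<le> nn | B \<Rightarrow> 1 \<le> nn | C \<Rightarrow> 1 \<le> nn | D \<Rightarrow> 2 \<le> nn)"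

end

theory Submission
  imports Defs
begin


lemma vadd_apply: "vadd x y c = x c + y c" by (simp add: vadd_def)
lemma vsmul_apply: "vsmul r x c = r * x c" by (simp add: vsmul_def)
lemma vneg_apply: "vneg x c = - x c" by (simp add: vneg_def)
lemma vzero_apply: "vzero c = 0" by (simp add: vzero_def)
lemma vsum_apply: "vsum f A c = (\<Sum>i\<in>A. f i c)" by (simp add: vsum_def)
lemma unitv_apply: "unitv i c = (if c = i then 1 else 0)" by (simp add: unitv_def)

definition vsub :: "(nat \<Rightarrow> real) \<Rightarrow> (nat \<Rightarrow> real) \<Rightarrow> nat \<Rightarrow> real" where
  "vsub x y = vadd x (vneg y)"
lemma vsub_apply: "vsub x y c = x c - y c" by (simp add: vsub_def vadd_apply vneg_apply)

lemmas vapp = vadd_apply vsmul_apply vneg_apply vzero_apply vsum_apply vsub_apply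

definition gsp :: "('i \<Rightarrow> nat \<Rightarrow> real) \<Rightarrow> 'i set \<Rightarrow> (nat \<Rightarrow> real) set" where
  "gsp v Y = {vsum (\<lambda>b. vsmul (f b) (v b)) Y | f. True}"

lemma gspI: "x = vsum (\<lambda>b. vsmul (f b) (v b)) Y \<Longrightarrow> x \<in> gsp v Y"
  unfolding gsp_def by blast

lemma gsp_zero: "vzero \<in> gsp v Y"
proof -
  have "vzero = vsum (\<lambda>b. vsmul ((\<lambda>_. 0) b) (v b)) Y" by (rule ext) (simp add: vapp)
  thus ?thesis by (rule gspI)
qed

lemma gsp_add: assumes "x \<in> gsp v Y" "y \<in> gsp v Y" shows "vadd x y \<in> gsp v Y"
proof -
  obtain f g where "x = vsum (\<lambda>b. vsmul (f b) (v b)) Y" "y = vsum (\<lambda>b. vsmul (g b) (v b)) Y"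
    using assms unfolding gsp_def by blast
  hence "vadd x y = vsum (\<lambda>b. vsmul ((\<lambda>b. f b + g b) b) (v b)) Y"
    by (auto simp: fun_eq_iff vapp algebra_simps sum.distrib)
  thus ?thesis by (rule gspI)
qed

lemma gsp_smul: assumes "x \<in> gsp v Y" shows "vsmul r x \<in> gsp v Y"
proof -
  obtain f where "x = vsum (\<lambda>b. vsmul (f b) (v b)) Y"
    using assms unfolding gsp_def by blast
  hence "vsmul r x = vsum (\<lambda>b. vsmul ((\<lambda>b. r * f b) b) (v b)) Y"
    by (auto simp: fun_eq_iff vapp algebra_simps sum_distrib_left)
  thus ?thesis by (rule gspI)
qed

lemma vneg_eq_smul: "vneg x = vsmul (-1) x" by (rule ext) (simp add: vapp)

lemma gsp_neg: "x \<in> gsp v Y \<Longrightarrow> vneg x \<in> gsp v Y"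
  by (metis vneg_eq_smul gsp_smul)

lemma gsp_sub: "x \<in> gsp v Y \<Longrightarrow> y \<in> gsp v Y \<Longrightarrow> vsub x y \<in> gsp v Y"
  unfolding vsub_def by (metis gsp_add gsp_neg)

lemma gsp_mem: assumes "finite Y" "b \<in> Y" shows "v b \<in> gsp v Y"
proof -
  have "v b = vsum (\<lambda>c. vsmul ((\<lambda>c. if c = b then 1 else 0) c) (v c)) Y"
  proof (rule ext)
    fix x
    have "(\<Sum>c\<in>Y. (if c = b then 1 else 0) * v c x) = (\<Sum>c\<in>Y. if c = b then v c x else 0)"
      by (rule sum.cong) auto
    also have "\<dots> = v b x" using assms by (simp add: sum.delta)
    finally show "v b x = vsum (\<lambda>c. vsmul ((\<lambda>c. if c = b then 1 else 0) c) (v c)) Y x" by (simp add: vapp)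
  qed
  thus ?thesis by (rule gspI)
qed

lemma gsp_mono: assumes "finite Y'" "Y \<subseteq> Y'" "x \<in> gsp v Y" shows "x \<in> gsp v Y'"
proof -
  obtain f where f: "x = vsum (\<lambda>b. vsmul (f b) (v b)) Y"
    using assms unfolding gsp_def by blast
  have "x = vsum (\<lambda>b. vsmul ((\<lambda>b. if b \<in> Y then f b else 0) b) (v b)) Y'"
  proof (rule ext)
    fix c
    have "(\<Sum>b\<in>Y'. (if b \<in> Y then f b else 0) * v b c) = (\<Sum>b\<in>Y'. if b \<in> Y then f b * v b c else 0)"
      by (rule sum.cong) auto
    also have "\<dots> = (\<Sum>b\<in>Y' \<inter> Y. f b * v b c)" using assms(1) by (simp add: sum.inter_restrict)
    also have "Y' \<inter> Y = Y" using assms(2) by blast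
    finally show "x c = vsum (\<lambda>b. vsmul ((\<lambda>b. if b \<in> Y then f b else 0) b) (v b)) Y' c"
      using f by (simp add: vapp)
  qed
  thus ?thesis by (rule gspI)
qed

lemma gsp_vsum: assumes "finite A" "\<And>i. i \<in> A \<Longrightarrow> g i \<in> gsp v Y" shows "vsum g A \<in> gsp v Y"
  using assms
proof (induction A rule: finite_induct)
  case empty
  have "vsum g {} = vzero" by (rule ext) (simp add: vapp)
  then show ?case by (metis gsp_zero)
next
  case (insert a A)
  have "vsum g (insert a A) = vadd (g a) (vsum g A)" using insert by (auto simp: fun_eq_iff vapp)
  then show ?case using insert by (metis gsp_add insertCI)
qed

definition lin :: "((nat \<Rightarrow> real) \<Rightarrow> nat \<Rightarrow> real) \<Rightarrow> bool" where
  "lin M \<longleftrightarrow> (\<forall>x y. M (vadd x y) = vadd (M x) (M y)) \<and> (\<forall>r x. M (vsmul r x) = vsmul r (M x))"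

lemma lin_add: "lin M \<Longrightarrow> M (vadd x y) = vadd (M x) (M y)" by (simp add: lin_def)
lemma lin_smul: "lin M \<Longrightarrow> M (vsmul r x) = vsmul r (M x)" by (simp add: lin_def)
lemma lin_zero: assumes "lin M" shows "M vzero = vzero"
proof -
  have "vzero = vsmul 0 vzero" by (rule ext) (simp add: vapp)
  hence "M vzero = vsmul 0 (M vzero)" using lin_smul[OF assms] by metis
  thus ?thesis by (auto simp: fun_eq_iff vapp)
qed
lemma lin_neg: "lin M \<Longrightarrow> M (vneg x) = vneg (M x)"
  by (metis vneg_eq_smul lin_smul)
lemma lin_sub: "lin M \<Longrightarrow> M (vsub x y) = vsub (M x) (M y)"
  unfolding vsub_def by (metis lin_add lin_neg)
lemma lin_vsum: assumes "lin M" shows "M (vsum g A) = vsum (\<lambda>i. M (g i)) A"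
proof (cases "finite A")
  case True
  then show ?thesis
  proof (induction A rule: finite_induct)
    case empty
    have "vsum g {} = vzero" "vsum (\<lambda>i. M (g i)) {} = vzero" by (rule ext, simp add: vapp)+
    then show ?case using lin_zero[OF assms] by metis
  next
    case (insert a A)
    have "vsum g (insert a A) = vadd (g a) (vsum g A)"
      "vsum (\<lambda>i. M (g i)) (insert a A) = vadd (M (g a)) (vsum (\<lambda>i. M (g i)) A)"
      using insert by (auto simp: fun_eq_iff vapp)
    then show ?case using insert lin_add[OF assms] by simp
  qed
next
  case False
  have "vsum g A = vzero" "vsum (\<lambda>i. M (g i)) A = vzero" using False by (auto simp: fun_eq_iff vapp)
  then show ?thesis using lin_zero[OF assms] by metis
qed

lemma lin_gsp: assumes "lin M" "x \<in> gsp v Y" "\<And>b. b \<in> Y \<Longrightarrow> M (v b) \<in> gsp u Y'"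
  "finite Y"
  shows "M x \<in> gsp u Y'"
proof -
  obtain f where f: "x = vsum (\<lambda>b. vsmul (f b) (v b)) Y"
    using assms unfolding gsp_def by blast
  have "M x = vsum (\<lambda>b. vsmul (f b) (M (v b))) Y"
    unfolding f lin_vsum[OF assms(1)] lin_smul[OF assms(1)] by (rule refl)
  also have "\<dots> \<in> gsp u Y'" using assms(3,4) by (intro gsp_vsum gsp_smul) auto
  finally show ?thesis .
qed

lemma lin_comp: "lin M \<Longrightarrow> lin M' \<Longrightarrow> lin (M \<circ> M')"
  by (simp add: lin_def)
lemma lin_id: "lin id" by (simp add: lin_def)

definition sg :: "kind \<Rightarrow> nat \<Rightarrow> nat \<Rightarrow> nat \<Rightarrow> real" where
  "sg k nn mm c = (if odd_idx k nn mm c then -1 else 1)"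

lemma form_sg: "form k nn mm x y = (\<Sum>c\<in>coords k nn mm. sg k nn mm c * x c * y c)"
  by (simp add: form_def sg_def)

lemma sg_sq: "sg k nn mm c * sg k nn mm c = 1" by (simp add: sg_def)

lemma form_sym: "form k nn mm x y = form k nn mm y x"
  by (simp add: form_sg mult_ac)
lemma form_add1: "form k nn mm (vadd x y) z = form k nn mm x z + form k nn mm y z"
  by (simp add: form_sg vapp algebra_simps sum.distrib)
lemma form_add2: "form k nn mm z (vadd x y) = form k nn mm z x + form k nn mm z y"
  by (simp add: form_sg vapp algebra_simps sum.distrib)
lemma form_smul1: "form k nn mm (vsmul r x) z = r * form k nn mm x z"
  by (simp add: form_sg vapp algebra_simps sum_distrib_left)
lemma form_smul2: "form k nn mm z (vsmul r x) = r * form k nn mm z x"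
  by (simp add: form_sg vapp algebra_simps sum_distrib_left)
lemma form_neg1: "form k nn mm (vneg x) z = - form k nn mm x z"
  by (simp add: vneg_eq_smul form_smul1)
lemma form_neg2: "form k nn mm z (vneg x) = - form k nn mm z x"
  by (simp add: vneg_eq_smul form_smul2)
lemma form_sub1: "form k nn mm (vsub x y) z = form k nn mm x z - form k nn mm y z"
  by (simp add: vsub_def form_add1 form_neg1)
lemma form_sub2: "form k nn mm z (vsub x y) = form k nn mm z x - form k nn mm z y"
  by (simp add: vsub_def form_add2 form_neg2)
lemma form_zero1: "form k nn mm vzero z = 0" by (simp add: form_sg vapp)
lemma form_zero2: "form k nn mm z vzero = 0" by (simp add: form_sg vapp)
lemma form_vsum1: "form k nn mm (vsum g A) z = (\<Sum>i\<in>A. form k nn mm (g i) z)"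
  by (simp add: form_sg vapp sum_distrib_left sum_distrib_right sum.swap[of _ A] mult_ac)
lemma form_vsum2: "form k nn mm z (vsum g A) = (\<Sum>i\<in>A. form k nn mm z (g i))"
  by (simp add: form_sg vapp sum_distrib_left sum_distrib_right sum.swap[of _ A] mult_ac)

lemma form_gsp1: assumes "x \<in> gsp v Y" "\<And>b. b \<in> Y \<Longrightarrow> form k nn mm (v b) z = 0"
  shows "form k nn mm x z = 0"
proof -
  obtain f where f: "x = vsum (\<lambda>b. vsmul (f b) (v b)) Y"
    using assms unfolding gsp_def by blast
  show ?thesis using assms(2) by (simp add: f form_vsum1 form_smul1)
qed


locale ctx =
  fixes k :: kind and nn mm :: nat
  assumes vp: "valid_params k nn mm"
begin

abbreviation "NN \<equiv> tot k nn mm"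
abbreviation "qq \<equiv> mm + nn"
abbreviation "Z \<equiv> zeta k nn mm"
abbreviation "A \<equiv> simple k nn mm"
abbreviation "F \<equiv> form k nn mm"
abbreviation "CO \<equiv> coords k nn mm"
abbreviation "II \<equiv> sr_idx k nn mm"
abbreviation "pr \<equiv> prim k nn mm"
abbreviation "od \<equiv> odd_idx k nn mm"
abbreviation "sgk \<equiv> sg k nn mm"

lemma nn_pos: "1 \<le> nn" using vp by (cases k) (auto simp: valid_params_def)
lemma nnD: "k = D \<Longrightarrow> 2 \<le> nn" using vp by (auto simp: valid_params_def)

lemma NN_eq: "NN = dimN k nn + 2*mm" by (simp add: tot_def)

lemma osp_CO: "k \<noteq> GL \<Longrightarrow> CO = {1..qq}" by (simp add: coords_def rk_def)
lemma osp_NN: "k \<noteq> GL \<Longrightarrow> 2*qq \<le> NN \<and> NN \<le> 2*qq+1"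
  by (cases k) (auto simp: tot_def dimN_def)
lemma osp_NN_D: "k = D \<Longrightarrow> NN = 2*qq" "k = C \<Longrightarrow> NN = 2*qq" "k = B \<Longrightarrow> NN = 2*qq+1"
  by (auto simp: tot_def dimN_def)
lemma GL_CO: "k = GL \<Longrightarrow> CO = {1..NN}" by (simp add: coords_def rk_def)
lemma GL_II: "k = GL \<Longrightarrow> II = {1..NN - 1}" by (simp add: sr_idx_def nsr_def)
lemma osp_II: "k \<noteq> GL \<Longrightarrow> II = {1..qq}" by (simp add: sr_idx_def nsr_def)
lemma CO_sub: "CO \<subseteq> {1..NN}"
proof (cases "k = GL")
  case True show ?thesis by (simp add: GL_CO[OF True])
next
  case False show ?thesis using osp_NN[OF False] by (auto simp: osp_CO[OF False])
qed
lemma II_sub: "b \<in> II \<Longrightarrow> 1 \<le> b \<and> Suc b \<le> NN"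
proof (cases "k = GL")
  case True show "b \<in> II \<Longrightarrow> 1 \<le> b \<and> Suc b \<le> NN" by (auto simp: GL_II[OF True])
next
  case False show "b \<in> II \<Longrightarrow> 1 \<le> b \<and> Suc b \<le> NN" 
    using osp_NN[OF False] nn_pos by (auto simp: osp_II[OF False])
qed
lemma pr_eq: "pr j = NN + 1 - j" by (simp add: prim_def)
lemma pr_pr: "j \<in> {1..NN} \<Longrightarrow> pr (pr j) = j" by (auto simp: pr_eq)
lemma pr_range: "j \<in> {1..NN} \<Longrightarrow> pr j \<in> {1..NN}" by (auto simp: pr_eq)
lemma od_pr: "j \<in> {1..NN} \<Longrightarrow> od (pr j) = od j"
  by (auto simp: pr_eq odd_idx_def tot_def)
lemma sgn_pr: "j \<in> {1..NN} \<Longrightarrow> sgk (pr j) = sgk j"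
  using od_pr by (simp add: sg_def)
lemma pr_inj: "i \<in> {1..NN} \<Longrightarrow> j \<in> {1..NN} \<Longrightarrow> pr i = pr j \<Longrightarrow> i = j"
  by (metis pr_pr)

definition inV :: "(nat \<Rightarrow> real) \<Rightarrow> bool" where
  "inV x \<longleftrightarrow> (\<forall>c. c \<notin> CO \<longrightarrow> x c = 0)"

lemma zeta_osp: "k \<noteq> GL \<Longrightarrow> Z j = (if j \<le> qq then unitv j else if pr j \<le> qq then vneg (unitv (pr j)) else vzero)"
  by (simp add: zeta_def)
lemma zeta_GL: "k = GL \<Longrightarrow> Z j = unitv j"
  by (simp add: zeta_def)

lemma zeta_CO: "c \<in> CO \<Longrightarrow> Z c = unitv c"
proof (cases "k = GL")
  case True show "c \<in> CO \<Longrightarrow> Z c = unitv c" by (simp add: zeta_GL[OF True])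
next
  case False show "c \<in> CO \<Longrightarrow> Z c = unitv c" by (auto simp: zeta_osp[OF False] osp_CO[OF False])
qed

lemma zeta_prim: assumes "k \<noteq> GL" "j \<in> {1..NN}" shows "Z (pr j) = vneg (Z j)"
proof -
  have pp: "pr (pr j) = j" using assms pr_pr by blast
  have n: "2*qq \<le> NN" using osp_NN assms by blast
  show ?thesis
  proof (cases "j \<le> qq")
    case True
    hence "\<not> pr j \<le> qq" using assms n by (auto simp: pr_eq)
    then show ?thesis using True pp assms by (simp add: zeta_osp)
  next
    case False
    then show ?thesis using pp assms
      by (auto simp: zeta_osp fun_eq_iff vapp)
  qed
qed

lemma unitv_V: "c \<in> CO \<Longrightarrow> inV (unitv c)" by (auto simp: inV_def unitv_apply)

lemma zeta_V: assumes "j \<in> {1..NN}" shows "inV (Z j)"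
proof (cases "k = GL")
  case True show ?thesis using assms unitv_V by (auto simp: zeta_GL[OF True] GL_CO[OF True])
next
  case False
  then show ?thesis using assms
    by (auto simp: zeta_osp inV_def unitv_apply osp_CO vapp pr_eq)
qed

lemma form_unitv: "F (unitv a) (unitv b) = (if a = b \<and> a \<in> CO then sgk a else 0)"
proof -
  have "F (unitv a) (unitv b) = (\<Sum>c\<in>CO. if c = a \<and> a = b then sgk a else 0)"
    unfolding form_sg by (rule sum.cong) (auto simp: unitv_apply)
  also have "\<dots> = (if a = b \<and> a \<in> CO then sgk a else 0)"
    by (cases "a = b") (auto simp: sum.delta' coords_def)
  finally show ?thesis .
qed

lemma form_zeta: assumes "i \<in> {1..NN}" "j \<in> {1..NN}"
  shows "F (Z i) (Z j) = (if i = j then sgk i else 0) - (if k \<noteq> GL \<and> i = pr j then sgk i else 0)"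
proof (cases "k = GL")
  case True
  have "\<not> (k \<noteq> GL \<and> i = pr j)" using True by blast
  then show ?thesis using assms by (simp add: zeta_GL[OF True] form_unitv GL_CO[OF True]) blast
next
  case False
  have n: "2*qq \<le> NN" "NN \<le> 2*qq+1" using osp_NN False by auto
  have sp: "sgk (pr i) = sgk i" "sgk (pr j) = sgk j" using sgn_pr assms by auto
  have pp: "pr (pr i) = i" "pr (pr j) = j" using assms pr_pr by auto
  have pr1: "1 \<le> pr i" "1 \<le> pr j" using assms by (auto simp: pr_eq)
  show ?thesis
  proof (cases "i \<le> qq")
    case ci: True
    show ?thesis
    proof (cases "j \<le> qq")
      case True
      then show ?thesis using ci False assms n
        by (auto simp: zeta_osp form_unitv osp_CO pr_eq)
    next
      case cj: False
      show ?thesis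
      proof (cases "pr j \<le> qq")
        case True
        then show ?thesis using ci cj False assms n pp pr1
          by (auto simp: zeta_osp form_unitv osp_CO form_neg2 form_zero2)
      next
        case False
        then show ?thesis using ci cj \<open>k \<noteq> GL\<close> assms n pp pr1
          by (auto simp: zeta_osp form_unitv osp_CO form_neg2 form_zero2)
      qed
    qed
  next
    case ci: False
    show ?thesis
    proof (cases "pr i \<le> qq")
      case cpi: True
      show ?thesis
      proof (cases "j \<le> qq")
        case True
        then show ?thesis using ci cpi False assms n pp sp pr1
          by (auto simp: zeta_osp form_unitv osp_CO form_neg1 form_zero1)
      next
        case cj: False
        show ?thesis
        proof (cases "pr j \<le> qq")
          case True
          have "i = j \<longleftrightarrow> pr i = pr j" using pp by metis
          then show ?thesis using True ci cj cpi \<open>k \<noteq> GL\<close> assms n pp sp pr1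
            by (auto simp: zeta_osp form_unitv osp_CO form_neg1 form_neg2 form_zero1)
        next
          case False
          then show ?thesis using ci cj cpi \<open>k \<noteq> GL\<close> assms n pp pr1
            by (auto simp: zeta_osp form_unitv osp_CO form_neg1 form_neg2 form_zero2 form_zero1)
        qed
      qed
    next
      case cpi: False
      have "i = pr i" using ci cpi n assms by (auto simp: pr_eq)
      then show ?thesis using ci cpi \<open>k \<noteq> GL\<close> pp
        by (auto simp: zeta_osp form_zero1)
    qed
  qed
qed

lemma V_decomp: assumes "inV x" shows "x = vsum (\<lambda>c. vsmul (x c) (Z c)) CO"
proof (rule ext)
  fix d
  have "vsum (\<lambda>c. vsmul (x c) (Z c)) CO d = (\<Sum>c\<in>CO. if c = d then x c else 0)"
    by (auto simp: vapp zeta_CO unitv_apply intro!: sum.cong)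
  also have "\<dots> = x d" using assms by (auto simp: sum.delta' coords_def inV_def)
  finally show "x d = vsum (\<lambda>c. vsmul (x c) (Z c)) CO d" ..
qed

lemma inV_add: "inV x \<Longrightarrow> inV y \<Longrightarrow> inV (vadd x y)" by (simp add: inV_def vapp)
lemma inV_smul: "inV x \<Longrightarrow> inV (vsmul r x)" by (simp add: inV_def vapp)
lemma inV_neg: "inV x \<Longrightarrow> inV (vneg x)" by (simp add: inV_def vapp)
lemma inV_sub: "inV x \<Longrightarrow> inV y \<Longrightarrow> inV (vsub x y)" by (simp add: inV_def vapp)
lemma inV_zero: "inV vzero" by (simp add: inV_def vapp)
lemma inV_vsum: "(\<And>i. i \<in> X \<Longrightarrow> inV (g i)) \<Longrightarrow> inV (vsum g X)" by (simp add: inV_def vapp)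

lemma nondeg: assumes "inV z" "\<And>j. j \<in> CO \<Longrightarrow> F z (Z j) = 0" shows "z = vzero"
proof (rule ext)
  fix d
  show "z d = vzero d"
  proof (cases "d \<in> CO")
    case True
    have "F z (Z d) = (\<Sum>c\<in>CO. if c = d then sgk d * z d else 0)"
      unfolding form_sg zeta_CO[OF True] by (rule sum.cong) (auto simp: unitv_apply)
    also have "\<dots> = sgk d * z d" using True by (simp add: sum.delta' coords_def)
    finally have "sgk d * z d = 0" using assms(2) True by simp
    then show ?thesis by (simp add: sg_def vapp split: if_splits)
  next
    case False then show ?thesis using assms(1) by (simp add: inV_def vapp)
  qed
qed

lemma simple_gen: assumes "b \<in> II" "\<not> (k \<noteq> GL \<and> b = qq)"
  shows "A b = vsub (Z b) (Z (Suc b)) \<and> b \<in> CO \<and> Suc b \<in> CO"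
proof -
  have "b \<in> CO \<and> Suc b \<in> CO"
  proof (cases "k = GL")
    case True show ?thesis using assms by (auto simp: GL_II[OF True] GL_CO[OF True])
  next
    case False show ?thesis using assms False by (auto simp: osp_II[OF False] osp_CO[OF False])
  qed
  moreover have "A b = vadd (Z b) (vneg (Z (Suc b)))" using assms unfolding simple_def by auto
  ultimately show ?thesis by (simp add: vsub_def)
qed

lemma simple_B: "k = B \<Longrightarrow> A qq = Z qq" by (simp add: simple_def)
lemma simple_C: "k = C \<Longrightarrow> A qq = vsmul 2 (Z qq)" by (simp add: simple_def)
lemma simple_D: "k = D \<Longrightarrow> A qq = vadd (Z (qq - 1)) (Z qq)" by (simp add: simple_def)

lemma simple_V: assumes "b \<in> II" shows "inV (A b)"
proof (cases "k \<noteq> GL \<and> b = qq")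
  case True
  have r: "qq \<in> {1..NN}" "qq - 1 \<in> {1..NN}" if "k = D"
    using osp_NN_D(1)[OF that] nnD[OF that] by auto
  have r2: "qq \<in> {1..NN}" using True osp_NN[of] nn_pos by auto
  show ?thesis
  proof (cases k)
    case GL then show ?thesis using True by simp
  next
    case B show ?thesis using True r2 by (simp add: simple_B[OF B] zeta_V)
  next
    case C show ?thesis using True r2 by (simp add: simple_C[OF C] zeta_V inV_smul)
  next
    case D show ?thesis using True r[OF D] by (simp add: simple_D[OF D] zeta_V inV_add)
  qed
next
  case False
  then show ?thesis using simple_gen[OF assms False] CO_sub by (auto intro!: inV_sub zeta_V)
qed

end


context ctx begin

definition goodp :: "(nat \<Rightarrow> nat) \<Rightarrow> bool" where
  "goodp \<rho> \<longleftrightarrow> (\<forall>j\<in>{1..NN}. \<rho> j \<in> {1..NN} \<and> \<rho> (\<rho> j) = j \<and> od (\<rho> j) = od j) \<and>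
     (k \<noteq> GL \<longrightarrow> (\<forall>j\<in>{1..NN}. \<rho> (pr j) = pr (\<rho> j)))"

lemma finite_CO: "finite CO" by (simp add: coords_def)

abbreviation "LP \<equiv> lin_of_perm k nn mm"

lemma LP_apply: "LP \<rho> x = vsum (\<lambda>c. vsmul (x c) (Z (\<rho> c))) CO"
  by (simp add: lin_of_perm_def)

lemma LP_lin: "lin (LP \<rho>)"
  unfolding lin_def
proof (intro conjI allI)
  fix x y show "LP \<rho> (vadd x y) = vadd (LP \<rho> x) (LP \<rho> y)"
    by (rule ext) (simp only: LP_apply vapp distrib_right sum.distrib)
next
  fix r x show "LP \<rho> (vsmul r x) = vsmul r (LP \<rho> x)"
    by (rule ext) (simp only: LP_apply vapp sum_distrib_left mult.assoc)
qed

lemma zeta_fix: assumes "j \<in> {1..NN}" "pr j = j" "k \<noteq> GL" shows "Z j = vzero"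
proof -
  have "Z j = vneg (Z j)" using zeta_prim[OF assms(3,1)] assms(2) by simp
  hence "\<And>x. Z j x = - Z j x" by (metis vneg_apply)
  hence "\<And>x. Z j x = 0" by (metis add.inverse_unique add_0 neg_0_equal_iff_equal equal_neg_zero)
  thus ?thesis by (simp add: fun_eq_iff vzero_apply)
qed

lemma LP_unitv: "c \<in> CO \<Longrightarrow> LP \<rho> (unitv c) = Z (\<rho> c)"
proof (rule ext)
  fix d assume c: "c \<in> CO"
  have "LP \<rho> (unitv c) d = (\<Sum>e\<in>CO. if e = c then Z (\<rho> c) d else 0)"
    unfolding LP_apply vsum_apply by (rule sum.cong) (auto simp: vapp unitv_apply)
  also have "\<dots> = Z (\<rho> c) d" using c by (simp add: sum.delta' coords_def)
  finally show "LP \<rho> (unitv c) d = Z (\<rho> c) d" .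
qed

lemma LP_zeta: assumes g: "goodp \<rho>" and j: "j \<in> {1..NN}" shows "LP \<rho> (Z j) = Z (\<rho> j)"
proof (cases "j \<in> CO")
  case True then show ?thesis by (simp add: zeta_CO LP_unitv)
next
  case False
  have osp: "k \<noteq> GL"
  proof
    assume "k = GL" thus False using False j GL_CO[OF \<open>k = GL\<close>] by auto
  qed
  have n: "2*qq \<le> NN" "NN \<le> 2*qq+1" using osp_NN osp by auto
  have jq: "\<not> j \<le> qq" using False j by (auto simp: osp_CO[OF osp])
  have rj: "\<rho> j \<in> {1..NN}" using g j by (auto simp: goodp_def)
  have prj: "pr j \<in> {1..NN}" using pr_range j by blast
  have rpr: "\<rho> (pr j) = pr (\<rho> j)" using g osp j by (auto simp: goodp_def)
  show ?thesis
  proof (cases "pr j \<le> qq")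
    case True
    have pjc: "pr j \<in> CO" using True prj by (auto simp: osp_CO[OF osp])
    have "Z j = vneg (Z (pr j))" using zeta_prim[OF osp prj] pr_pr[OF j] by simp
    hence "LP \<rho> (Z j) = vneg (Z (\<rho> (pr j)))"
      using lin_neg[OF LP_lin] by (simp add: zeta_CO[OF pjc] LP_unitv[OF pjc])
    also have "\<dots> = vneg (vneg (Z (\<rho> j)))" using rpr zeta_prim[OF osp rj] by simp
    also have "\<dots> = Z (\<rho> j)" by (rule ext) (simp add: vapp)
    finally show ?thesis .
  next
    case False
    have pjj: "pr j = j" using False jq n j by (auto simp: pr_eq)
    have "pr (\<rho> j) = \<rho> j" using rpr pjj by simp
    hence "Z (\<rho> j) = vzero" using zeta_fix rj osp by blast
    moreover have "Z j = vzero" using zeta_fix j pjj osp by blast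
    ultimately show ?thesis using lin_zero[OF LP_lin] by simp
  qed
qed

lemma goodp_range: "goodp \<rho> \<Longrightarrow> j \<in> {1..NN} \<Longrightarrow> \<rho> j \<in> {1..NN}" by (simp add: goodp_def)
lemma goodp_inv: "goodp \<rho> \<Longrightarrow> j \<in> {1..NN} \<Longrightarrow> \<rho> (\<rho> j) = j" by (simp add: goodp_def)
lemma goodp_od: "goodp \<rho> \<Longrightarrow> j \<in> {1..NN} \<Longrightarrow> od (\<rho> j) = od j" by (simp add: goodp_def)
lemma goodp_pr: "goodp \<rho> \<Longrightarrow> k \<noteq> GL \<Longrightarrow> j \<in> {1..NN} \<Longrightarrow> \<rho> (pr j) = pr (\<rho> j)"
  by (simp add: goodp_def)

lemma LP_V: assumes "goodp \<rho>" shows "inV (LP \<rho> x)"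
  unfolding LP_apply using CO_sub goodp_range[OF assms]
  by (intro inV_vsum inV_smul zeta_V) auto

lemma LP_exp: assumes "inV x" shows "LP \<rho> x = vsum (\<lambda>c. vsmul (x c) (LP \<rho> (Z c))) CO"
  using lin_vsum[OF LP_lin, of \<rho> "\<lambda>c. vsmul (x c) (Z c)" CO] lin_smul[OF LP_lin]
    V_decomp[OF assms] by simp

lemma LP_inv: assumes g: "goodp \<rho>" and x: "inV x" shows "LP \<rho> (LP \<rho> x) = x"
proof -
  have "LP \<rho> (LP \<rho> x) = vsum (\<lambda>c. vsmul (x c) (LP \<rho> (Z (\<rho> c)))) CO"
    unfolding LP_apply[of \<rho> x] lin_vsum[OF LP_lin] lin_smul[OF LP_lin] by (rule refl)
  also have "\<dots> = vsum (\<lambda>c. vsmul (x c) (Z c)) CO"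
  proof -
    have "\<And>c. c \<in> CO \<Longrightarrow> LP \<rho> (Z (\<rho> c)) = Z c"
      using LP_zeta[OF g] goodp_range[OF g] goodp_inv[OF g] CO_sub by auto
    thus ?thesis by (simp add: vsum_def)
  qed
  also have "\<dots> = x" using V_decomp[OF x] by simp
  finally show ?thesis .
qed

lemma goodp_form: assumes g: "goodp \<rho>" and c: "c \<in> {1..NN}" and d: "d \<in> {1..NN}"
  shows "F (Z (\<rho> c)) (Z (\<rho> d)) = F (Z c) (Z d)"
proof -
  have rc: "\<rho> c \<in> {1..NN}" "\<rho> d \<in> {1..NN}" using g c d goodp_range by auto
  have e1: "\<rho> c = \<rho> d \<longleftrightarrow> c = d" using goodp_inv[OF g] c d by metis
  have s: "sgk (\<rho> c) = sgk c" using goodp_od[OF g c] by (simp add: sg_def)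
  have e2: "k \<noteq> GL \<Longrightarrow> (\<rho> c = pr (\<rho> d) \<longleftrightarrow> c = pr d)"
    using goodp_pr[OF g _ d] goodp_inv[OF g] c pr_range[OF d] by metis
  have L: "F (Z (\<rho> c)) (Z (\<rho> d)) = (if \<rho> c = \<rho> d then sgk (\<rho> c) else 0) - (if k \<noteq> GL \<and> \<rho> c = pr (\<rho> d) then sgk (\<rho> c) else 0)"
    using form_zeta rc by blast
  have R: "F (Z c) (Z d) = (if c = d then sgk c else 0) - (if k \<noteq> GL \<and> c = pr d then sgk c else 0)"
    using form_zeta c d by blast
  show ?thesis unfolding L R using e1 e2 s by auto
qed

lemma form_lc: "F (vsum (\<lambda>c. vsmul (x c) (u c)) X) (vsum (\<lambda>d. vsmul (y d) (v d)) Y)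
  = (\<Sum>c\<in>X. \<Sum>d\<in>Y. x c * (y d * F (u c) (v d)))"
proof -
  have "F (vsum (\<lambda>c. vsmul (x c) (u c)) X) (vsum (\<lambda>d. vsmul (y d) (v d)) Y)
     = (\<Sum>c\<in>X. x c * F (u c) (vsum (\<lambda>d. vsmul (y d) (v d)) Y))"
    by (subst form_vsum1) (simp only: form_smul1)
  also have "\<dots> = (\<Sum>c\<in>X. \<Sum>d\<in>Y. x c * (y d * F (u c) (v d)))"
    by (simp only: form_vsum2 form_smul2 sum_distrib_left)
  finally show ?thesis .
qed

lemma LP_isom: assumes g: "goodp \<rho>" and x: "inV x" and y: "inV y"
  shows "F (LP \<rho> x) (LP \<rho> y) = F x y"
proof -
  have "F (LP \<rho> x) (LP \<rho> y) = (\<Sum>c\<in>CO. \<Sum>d\<in>CO. x c * (y d * F (Z (\<rho> c)) (Z (\<rho> d))))"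
    unfolding LP_apply form_lc ..
  also have "\<dots> = (\<Sum>c\<in>CO. \<Sum>d\<in>CO. x c * (y d * F (Z c) (Z d)))"
  proof (intro sum.cong refl)
    fix c d assume "c \<in> CO" "d \<in> CO"
    hence "c \<in> {1..NN}" "d \<in> {1..NN}" using CO_sub by auto
    thus "x c * (y d * F (Z (\<rho> c)) (Z (\<rho> d))) = x c * (y d * F (Z c) (Z d))"
      using goodp_form[OF g] by simp
  qed
  also have "\<dots> = F (vsum (\<lambda>c. vsmul (x c) (Z c)) CO) (vsum (\<lambda>c. vsmul (y c) (Z c)) CO)"
    unfolding form_lc ..
  also have "\<dots> = F x y" using V_decomp x y by simp
  finally show ?thesis .
qed

lemma LP_adj: assumes g: "goodp \<rho>" and x: "inV x" and y: "inV y"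
  shows "F (LP \<rho> x) y = F x (LP \<rho> y)"
proof -
  have "F (LP \<rho> x) y = F (LP \<rho> x) (LP \<rho> (LP \<rho> y))" using LP_inv[OF g y] by simp
  also have "\<dots> = F x (LP \<rho> y)" using LP_isom[OF g x LP_V[OF g]] .
  finally show ?thesis .
qed

lemma LP_diff: assumes g: "goodp \<rho>" and x: "inV x" and fx: "finite X"
  and d: "\<And>j. j \<in> CO \<Longrightarrow> vsub (Z (\<rho> j)) (Z j) \<in> gsp A X"
  shows "vsub (LP \<rho> x) x \<in> gsp A X"
proof -
  have "vsub (LP \<rho> x) x = vsum (\<lambda>c. vsmul (x c) (vsub (Z (\<rho> c)) (Z c))) CO"
  proof (rule ext)
    fix e
    have xe: "x e = (\<Sum>c\<in>CO. x c * Z c e)" using fun_cong[OF V_decomp[OF x], of e] by (simp add: vapp)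
    show "vsub (LP \<rho> x) x e = vsum (\<lambda>c. vsmul (x c) (vsub (Z (\<rho> c)) (Z c))) CO e"
      unfolding LP_apply vsub_apply xe by (simp add: vapp sum_subtractf right_diff_distrib)
  qed
  also have "\<dots> \<in> gsp A X" using d finite_CO by (intro gsp_vsum gsp_smul) auto
  finally show ?thesis .
qed

lemma LP_fix: assumes g: "goodp \<rho>" and x: "inV x"
  and d: "\<And>j. j \<in> CO \<Longrightarrow> vsub (Z (\<rho> j)) (Z j) \<in> gsp A X"
  and orth: "\<And>b. b \<in> X \<Longrightarrow> F x (A b) = 0"
  shows "LP \<rho> x = x"
proof -
  have "vsub (LP \<rho> x) x = vzero"
  proof (rule nondeg)
    show "inV (vsub (LP \<rho> x) x)" using LP_V[OF g] x by (rule inV_sub)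
    fix j assume j: "j \<in> CO"
    have jn: "j \<in> {1..NN}" using j CO_sub by auto
    have "F (vsub (LP \<rho> x) x) (Z j) = F (LP \<rho> x) (Z j) - F x (Z j)" by (rule form_sub1)
    also have "F (LP \<rho> x) (Z j) = F x (Z (\<rho> j))"
      using LP_adj[OF g x zeta_V[OF jn]] LP_zeta[OF g jn] by simp
    also have "F x (Z (\<rho> j)) - F x (Z j) = F x (vsub (Z (\<rho> j)) (Z j))" by (simp add: form_sub2)
    also have "\<dots> = 0"
      using form_gsp1[OF d[OF j], where z = x and k = k and nn = nn and mm = mm] orth by (simp add: form_sym)
    finally show "F (vsub (LP \<rho> x) x) (Z j) = 0" .
  qed
  thus ?thesis by (auto simp: fun_eq_iff vapp)
qed

end


context ctx begin

abbreviation "RH X \<equiv> wperm k nn mm X"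

definition cok :: "nat set \<Rightarrow> bool" where
  "cok X \<longleftrightarrow> finite X \<and> goodp (RH X) \<and> (\<forall>j\<in>CO. vsub (Z (RH X j)) (Z j) \<in> gsp A X)"

definition orth :: "nat set \<Rightarrow> nat set \<Rightarrow> bool" where
  "orth X Y \<longleftrightarrow> (\<forall>b\<in>X. \<forall>b'\<in>Y. F (A b) (A b') = 0)"

lemma vadd_sub_cancel: "vadd x (vsub y x) = y" by (rule ext) (simp add: vapp)

lemma LP_comm1:
  assumes X: "cok X" and Y: "cok Y" and o: "orth X Y" and x: "inV x"
  shows "LP (RH X) (LP (RH Y) x) = LP (RH Y) (LP (RH X) x)"
proof -
  have gX: "goodp (RH X)" and gY: "goodp (RH Y)" and fX: "finite X" and fY: "finite Y"
    using X Y by (auto simp: cok_def)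
  define c where "c = vsub (LP (RH X) x) x"
  define d where "d = vsub (LP (RH Y) x) x"
  have cX: "c \<in> gsp A X" unfolding c_def using LP_diff[OF gX x fX] X by (auto simp: cok_def)
  have dY: "d \<in> gsp A Y" unfolding d_def using LP_diff[OF gY x fY] Y by (auto simp: cok_def)
  have cV: "inV c" unfolding c_def using LP_V[OF gX] x by (rule inV_sub)
  have dV: "inV d" unfolding d_def using LP_V[OF gY] x by (rule inV_sub)
  have dfix: "LP (RH X) d = d"
  proof (rule LP_fix[OF gX dV])
    show "\<And>j. j \<in> CO \<Longrightarrow> vsub (Z (RH X j)) (Z j) \<in> gsp A X" using X by (auto simp: cok_def)
    fix b assume b: "b \<in> X"
    show "F d (A b) = 0"
      using form_gsp1[OF dY, where z = "A b" and k = k and nn = nn and mm = mm] o b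
      by (auto simp: orth_def form_sym)
  qed
  have cfix: "LP (RH Y) c = c"
  proof (rule LP_fix[OF gY cV])
    show "\<And>j. j \<in> CO \<Longrightarrow> vsub (Z (RH Y j)) (Z j) \<in> gsp A Y" using Y by (auto simp: cok_def)
    fix b assume b: "b \<in> Y"
    show "F c (A b) = 0"
      using form_gsp1[OF cX, where z = "A b" and k = k and nn = nn and mm = mm] o b
      by (auto simp: orth_def)
  qed
  have e1: "LP (RH Y) x = vadd x d" unfolding d_def by (simp add: vadd_sub_cancel)
  have e2: "LP (RH X) x = vadd x c" unfolding c_def by (simp add: vadd_sub_cancel)
  have "LP (RH X) (LP (RH Y) x) = vadd (vadd x c) d"
    unfolding e1 lin_add[OF LP_lin] dfix e2 ..
  also have "\<dots> = vadd (vadd x d) c" by (rule ext) (simp add: vapp)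
  also have "\<dots> = LP (RH Y) (LP (RH X) x)"
    unfolding e2 lin_add[OF LP_lin] cfix e1 ..
  finally show ?thesis .
qed

definition Wl :: "nat set list \<Rightarrow> (nat \<Rightarrow> real) \<Rightarrow> nat \<Rightarrow> real" where
  "Wl cs = foldr (\<lambda>X f. LP (RH X) \<circ> f) cs id"

lemma Wl_Nil: "Wl [] = id" by (simp add: Wl_def)
lemma Wl_Cons: "Wl (X # cs) = LP (RH X) \<circ> Wl cs" by (simp add: Wl_def)

lemma Wl_lin: "lin (Wl cs)"
proof (induction cs)
  case Nil show ?case unfolding Wl_Nil by (rule lin_id)
next
  case (Cons X cs) show ?case unfolding Wl_Cons by (rule lin_comp[OF LP_lin Cons.IH])
qed

lemma Wl_V: "\<forall>X\<in>set cs. cok X \<Longrightarrow> inV x \<Longrightarrow> inV (Wl cs x)"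
  by (induction cs) (auto simp: Wl_Nil Wl_Cons cok_def LP_V)

lemma Wl_isom: "\<forall>X\<in>set cs. cok X \<Longrightarrow> inV x \<Longrightarrow> inV y \<Longrightarrow> F (Wl cs x) (Wl cs y) = F x y"
proof (induction cs)
  case Nil then show ?case by (simp add: Wl_Nil)
next
  case (Cons X cs)
  have g: "goodp (RH X)" using Cons by (auto simp: cok_def)
  show ?case using Cons LP_isom[OF g Wl_V Wl_V] by (simp add: Wl_Cons)
qed

lemma Wl_diff: assumes "\<forall>X\<in>set cs. cok X \<and> X \<subseteq> S" "finite S" "inV x"
  shows "vsub (Wl cs x) x \<in> gsp A S"
  using assms
proof (induction cs arbitrary: x)
  case Nil
  have "vsub (Wl [] x) x = vzero" by (rule ext) (simp add: Wl_Nil vapp)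
  then show ?case by (metis gsp_zero)
next
  case (Cons X cs)
  have g: "goodp (RH X)" and fX: "finite X" and XS: "X \<subseteq> S" using Cons by (auto simp: cok_def)
  have y: "inV (Wl cs x)" using Cons Wl_V by auto
  have a: "vsub (LP (RH X) (Wl cs x)) (Wl cs x) \<in> gsp A S"
    using gsp_mono[OF Cons.prems(2) XS LP_diff[OF g y fX]] Cons by (auto simp: cok_def)
  have b: "vsub (Wl cs x) x \<in> gsp A S" using Cons by auto
  have "vsub (Wl (X # cs) x) x = vadd (vsub (LP (RH X) (Wl cs x)) (Wl cs x)) (vsub (Wl cs x) x)"
    by (rule ext) (simp add: Wl_Cons vapp)
  then show ?case using a b by (metis gsp_add)
qed

lemma Wl_fix: assumes "\<forall>X\<in>set cs. cok X \<and> X \<subseteq> S" "inV x" "\<And>b. b \<in> S \<Longrightarrow> F x (A b) = 0"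
  shows "Wl cs x = x"
  using assms
proof (induction cs)
  case Nil then show ?case by (simp add: Wl_Nil)
next
  case (Cons X cs)
  have g: "goodp (RH X)" and XS: "X \<subseteq> S" using Cons by (auto simp: cok_def)
  have "Wl cs x = x" using Cons by auto
  moreover have "LP (RH X) x = x"
    using LP_fix[OF g Cons.prems(2)] Cons XS by (auto simp: cok_def)
  ultimately show ?case by (simp add: Wl_Cons)
qed

lemma Wl_comm: assumes "\<forall>Y\<in>set cs. cok Y \<and> orth X Y" "cok X" "inV x"
  shows "LP (RH X) (Wl cs x) = Wl cs (LP (RH X) x)"
  using assms
proof (induction cs arbitrary: x)
  case Nil then show ?case by (simp add: Wl_Nil)
next
  case (Cons Y cs)
  have gX: "goodp (RH X)" using Cons by (auto simp: cok_def)
  have cY: "cok Y" "orth X Y" using Cons by auto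
  have wv: "inV (Wl cs x)" using Cons Wl_V by auto
  have "LP (RH X) (Wl (Y # cs) x) = LP (RH Y) (LP (RH X) (Wl cs x))"
    using LP_comm1[OF Cons.prems(2) cY(1) cY(2) wv] by (simp add: Wl_Cons)
  also have "\<dots> = LP (RH Y) (Wl cs (LP (RH X) x))" using Cons by auto
  finally show ?case by (simp add: Wl_Cons)
qed

lemma Wl_inv: assumes "\<forall>X\<in>set cs. cok X" "distinct cs"
  "\<And>X Y. X \<in> set cs \<Longrightarrow> Y \<in> set cs \<Longrightarrow> X \<noteq> Y \<Longrightarrow> orth X Y" "inV x"
  shows "Wl cs (Wl cs x) = x"
  using assms
proof (induction cs arbitrary: x)
  case Nil then show ?case by (simp add: Wl_Nil)
next
  case (Cons X cs)
  have gX: "goodp (RH X)" and cX: "cok X" using Cons by (auto simp: cok_def)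
  have oc: "\<forall>Y\<in>set cs. cok Y \<and> orth X Y" using Cons by auto
  have wv: "inV (Wl cs x)" using Cons Wl_V by auto
  have "Wl (X # cs) (Wl (X # cs) x) = LP (RH X) (Wl cs (LP (RH X) (Wl cs x)))"
    by (simp add: Wl_Cons)
  also have "\<dots> = LP (RH X) (LP (RH X) (Wl cs (Wl cs x)))"
    using Wl_comm[OF oc cX wv] by simp
  also have "Wl cs (Wl cs x) = x" using Cons by auto
  also have "LP (RH X) (LP (RH X) x) = x" using LP_inv[OF gX Cons.prems(4)] .
  finally show ?case .
qed

end


context ctx begin

lemma finite_II: "finite II" unfolding sr_idx_def by (rule finite_atLeastAtMost)

lemma gsp_V: assumes "\<And>b. b \<in> Y \<Longrightarrow> inV (v b)" "x \<in> gsp v Y" shows "inV x"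
proof -
  obtain f where f: "x = vsum (\<lambda>b. vsmul (f b) (v b)) Y" using assms(2) unfolding gsp_def by blast
  show ?thesis unfolding f by (rule inV_vsum, rule inV_smul, rule assms(1))
qed

lemma L_V: assumes "x \<in> gsp A Y" "Y \<subseteq> II" shows "inV x"
proof (rule gsp_V[OF _ assms(1)])
  fix b assume "b \<in> Y" thus "inV (A b)" using assms(2) simple_V by blast
qed

lemma vneg_vneg: "vneg (vneg x) = x" unfolding vneg_def by simp

lemma abstract_main:
  fixes S :: "nat set" and \<tau> :: "nat \<Rightarrow> nat" and T W :: "(nat \<Rightarrow> real) \<Rightarrow> nat \<Rightarrow> real"
  assumes SI: "S \<subseteq> II"
    and tbij: "bij_betw \<tau> II II"
    and tform: "\<And>a b. a \<in> II \<Longrightarrow> b \<in> II \<Longrightarrow> F (A (\<tau> a)) (A (\<tau> b)) = F (A a) (A b)"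
    and Tlin: "lin T"
    and TA: "\<And>a. a \<in> II \<Longrightarrow> T (A a) = A (\<tau> a)"
    and Wlin: "lin W"
    and WV: "\<And>x. inV x \<Longrightarrow> inV (W x)"
    and Winv: "\<And>x. inV x \<Longrightarrow> W (W x) = x"
    and Wisom: "\<And>x y. inV x \<Longrightarrow> inV y \<Longrightarrow> F (W x) (W y) = F x y"
    and Wdiff: "\<And>x. inV x \<Longrightarrow> vsub (W x) x \<in> gsp A S"
    and Wfix: "\<And>x. inV x \<Longrightarrow> (\<And>b. b \<in> S \<Longrightarrow> F x (A b) = 0) \<Longrightarrow> W x = x"
    and h5: "\<And>a. a \<in> S \<Longrightarrow> A (\<tau> a) = vneg (W (A a))"
    and LI: "\<And>c. c \<in> II \<Longrightarrow> A c \<in> gsp A S \<Longrightarrow> c \<in> S"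
  shows "\<And>x. x \<in> gsp A II \<Longrightarrow> T (W x) = W (T x)"
proof -
  have fS: "finite S" using SI finite_II finite_subset by blast
  have tII: "\<And>a. a \<in> II \<Longrightarrow> \<tau> a \<in> II" using tbij by (auto simp: bij_betw_def)
  have LV: "\<And>x. x \<in> gsp A II \<Longrightarrow> inV x" using L_V by blast
  have SL: "\<And>x. x \<in> gsp A S \<Longrightarrow> x \<in> gsp A II" using gsp_mono[OF finite_II SI] by blast
  have TL: "\<And>x. x \<in> gsp A II \<Longrightarrow> T x \<in> gsp A II"
  proof -
    fix x assume x: "x \<in> gsp A II"
    show "T x \<in> gsp A II"
    proof (rule lin_gsp[OF Tlin x _ finite_II])
      fix b assume "b \<in> II" thus "T (A b) \<in> gsp A II" using TA tII gsp_mem[OF finite_II] by simp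
    qed
  qed
  have Tisom: "\<And>x y. x \<in> gsp A II \<Longrightarrow> y \<in> gsp A II \<Longrightarrow> F (T x) (T y) = F x y"
  proof -
    fix x y assume x: "x \<in> gsp A II" and y: "y \<in> gsp A II"
    obtain f where f: "x = vsum (\<lambda>b. vsmul (f b) (A b)) II" using x unfolding gsp_def by blast
    obtain g where g: "y = vsum (\<lambda>b. vsmul (g b) (A b)) II" using y unfolding gsp_def by blast
    have Tx: "T x = vsum (\<lambda>b. vsmul (f b) (A (\<tau> b))) II"
      unfolding f lin_vsum[OF Tlin] lin_smul[OF Tlin] using TA by (simp add: vsum_def)
    have Ty: "T y = vsum (\<lambda>b. vsmul (g b) (A (\<tau> b))) II"
      unfolding g lin_vsum[OF Tlin] lin_smul[OF Tlin] using TA by (simp add: vsum_def)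
    have "F (T x) (T y) = (\<Sum>b\<in>II. \<Sum>d\<in>II. f b * (g d * F (A (\<tau> b)) (A (\<tau> d))))"
      by (simp only: Tx Ty form_lc)
    also have "\<dots> = (\<Sum>b\<in>II. \<Sum>d\<in>II. f b * (g d * F (A b) (A d)))"
      using tform by (intro sum.cong refl) simp
    also have "\<dots> = F x y" by (simp only: f g form_lc)
    finally show "F (T x) (T y) = F x y" .
  qed
  have Wadj: "\<And>x y. inV x \<Longrightarrow> inV y \<Longrightarrow> F (W x) y = F x (W y)"
  proof -
    fix x y assume x: "inV x" and y: "inV y"
    have "F (W x) y = F (W x) (W (W y))" using Winv[OF y] by simp
    also have "\<dots> = F x (W y)" using Wisom[OF x WV[OF y]] .
    finally show "F (W x) y = F x (W y)" .
  qed
  have WAb: "\<And>b. b \<in> S \<Longrightarrow> W (A b) = vneg (A (\<tau> b))"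
    using h5 vneg_vneg by metis
  have tS: "\<And>b. b \<in> S \<Longrightarrow> \<tau> b \<in> S"
  proof -
    fix b assume b: "b \<in> S"
    have bI: "b \<in> II" using b SI by blast
    have AbV: "inV (A b)" using simple_V bI by blast
    have "W (A b) = vadd (A b) (vsub (W (A b)) (A b))" by (rule ext) (simp add: vapp)
    also have "\<dots> \<in> gsp A S" using gsp_add gsp_mem[OF fS b] Wdiff[OF AbV] by blast
    finally have "A (\<tau> b) \<in> gsp A S" using h5[OF b] gsp_neg by metis
    thus "\<tau> b \<in> S" using LI tII bI by blast
  qed
  have tSS: "\<tau> ` S = S"
  proof -
    have "inj_on \<tau> S" using tbij SI by (auto simp: bij_betw_def intro: inj_on_subset)
    moreover have "\<tau> ` S \<subseteq> S" using tS by blast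
    ultimately show ?thesis using fS by (simp add: endo_inj_surj)
  qed
  have ttA: "\<And>b. b \<in> S \<Longrightarrow> A (\<tau> (\<tau> b)) = A b"
  proof -
    fix b assume b: "b \<in> S"
    have AbV: "inV (A b)" using simple_V SI b by blast
    have "A (\<tau> (\<tau> b)) = vneg (W (A (\<tau> b)))" using h5 tS b by blast
    also have "\<dots> = vneg (W (vneg (W (A b))))" using h5 b by simp
    also have "\<dots> = A b" using lin_neg[OF Wlin] Winv[OF AbV] vneg_vneg by simp
    finally show "A (\<tau> (\<tau> b)) = A b" .
  qed
  have TAS: "\<And>b. b \<in> S \<Longrightarrow> T (A b) \<in> gsp A S" using TA tS gsp_mem[OF fS] SI by auto
  have TWP: "\<And>p. p \<in> gsp A S \<Longrightarrow> T (W p) = W (T p)"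
  proof -
    fix p assume "p \<in> gsp A S"
    then obtain f where f: "p = vsum (\<lambda>b. vsmul (f b) (A b)) S" unfolding gsp_def by blast
    have e: "\<And>b. b \<in> S \<Longrightarrow> T (W (A b)) = W (T (A b))"
    proof -
      fix b assume b: "b \<in> S"
      have "T (W (A b)) = vneg (A (\<tau> (\<tau> b)))" using WAb[OF b] lin_neg[OF Tlin] TA tII SI b by auto
      also have "\<dots> = vneg (A b)" using ttA b by simp
      also have "\<dots> = W (T (A b))" using TA SI b WAb[OF tS[OF b]] ttA b by auto
      finally show "T (W (A b)) = W (T (A b))" .
    qed
    have "T (W p) = vsum (\<lambda>b. vsmul (f b) (T (W (A b)))) S"
      unfolding f lin_vsum[OF Wlin] lin_smul[OF Wlin] lin_vsum[OF Tlin] lin_smul[OF Tlin] ..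
    also have "\<dots> = vsum (\<lambda>b. vsmul (f b) (W (T (A b)))) S" using e by (simp add: vsum_def)
    also have "\<dots> = W (T p)"
      unfolding f lin_vsum[OF Wlin] lin_smul[OF Wlin] lin_vsum[OF Tlin] lin_smul[OF Tlin] ..
    finally show "T (W p) = W (T p)" .
  qed
  fix x assume xL: "x \<in> gsp A II"
  have xV: "inV x" using LV xL .
  define d where "d = vsub (W x) x"
  have dS: "d \<in> gsp A S" unfolding d_def using Wdiff[OF xV] .
  have Wx: "W x = vadd x d" unfolding d_def by (simp add: vadd_sub_cancel)
  have WxL: "W x \<in> gsp A II" unfolding Wx using gsp_add xL SL dS by blast
  have TxL: "T x \<in> gsp A II" using TL xL .
  have TxV: "inV (T x)" using LV TxL .
  define E where "E = vsub (T (W x)) (W (T x))"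
  have ES: "E \<in> gsp A S"
  proof -
    define d' where "d' = vsub (W (T x)) (T x)"
    have d'S: "d' \<in> gsp A S" unfolding d'_def using Wdiff[OF TxV] .
    have TdS: "T d \<in> gsp A S" using lin_gsp[OF Tlin dS TAS fS] .
    have "E = vsub (T d) d'" unfolding E_def d'_def Wx lin_add[OF Tlin]
      by (rule ext) (simp add: vapp)
    thus ?thesis using gsp_sub TdS d'S by metis
  qed
  have EV: "inV E" using L_V ES SI by blast
  have Eorth: "\<And>c. c \<in> S \<Longrightarrow> F E (A c) = 0"
  proof -
    fix c assume c: "c \<in> S"
    then obtain b where b: "b \<in> S" "c = \<tau> b" using tSS by blast
    have bI: "b \<in> II" and tbI: "\<tau> b \<in> II" using b SI tII by auto
    have AbL: "A b \<in> gsp A II" "A (\<tau> b) \<in> gsp A II" using gsp_mem[OF finite_II] bI tbI by auto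
    have AbV: "inV (A b)" "inV (A (\<tau> b))" using simple_V bI tbI by auto
    have "F (T (W x)) (A (\<tau> b)) = F (T (W x)) (T (A b))" using TA bI by simp
    also have "\<dots> = F (W x) (A b)" using Tisom WxL AbL by simp
    also have "\<dots> = F x (W (A b))" using Wadj xV AbV by simp
    also have "\<dots> = - F x (A (\<tau> b))" using WAb b by (simp add: form_neg2)
    finally have 1: "F (T (W x)) (A (\<tau> b)) = - F x (A (\<tau> b))" .
    have "F (W (T x)) (A (\<tau> b)) = F (T x) (W (A (\<tau> b)))" using Wadj TxV AbV by simp
    also have "W (A (\<tau> b)) = vneg (A (\<tau> (\<tau> b)))" using WAb tS b by simp
    also have "\<dots> = vneg (A b)" using ttA b by simp
    also have "F (T x) (vneg (A b)) = - F (T x) (T (A (\<tau> b)))" using TA tbI ttA b by (simp add: form_neg2)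
    also have "\<dots> = - F x (A (\<tau> b))" using Tisom xL AbL by simp
    finally have 2: "F (W (T x)) (A (\<tau> b)) = - F x (A (\<tau> b))" .
    show "F E (A c) = 0" unfolding E_def b(2) form_sub1 1 2 by simp
  qed
  have WE: "W E = E" using Wfix[OF EV Eorth] .
  have EW: "vsub (T (W (W x))) (W (T (W x))) = vneg (W E)"
    unfolding E_def lin_sub[OF Wlin] Winv[OF xV] Winv[OF TxV]
    by (rule ext) (simp add: vapp)
  have EW2: "vsub (T (W (W x))) (W (T (W x))) = E"
  proof -
    have a: "T (W (W x)) = vadd (T (W x)) (T (W d))"
      unfolding Wx lin_add[OF Wlin] lin_add[OF Tlin] ..
    have b: "W (T (W x)) = vadd (W (T x)) (W (T d))"
      unfolding Wx lin_add[OF Wlin] lin_add[OF Tlin] ..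
    have c: "T (W d) = W (T d)" using TWP dS by blast
    show ?thesis unfolding E_def a b c by (rule ext) (simp add: vapp)
  qed
  have "E = vneg E" using EW EW2 WE by simp
  hence "\<And>c. E c = - E c" by (metis vneg_apply)
  hence "\<And>c. E c = 0" by (metis add.inverse_unique add_0 neg_0_equal_iff_equal equal_neg_zero)
  hence "\<And>c. T (W x) c - W (T x) c = 0" unfolding E_def vsub_apply .
  thus "T (W x) = W (T x)" by (simp add: fun_eq_iff)
qed

end


context ctx begin

definition ind :: "bool \<Rightarrow> real" where "ind P = (if P then 1 else 0)"

lemma simple_coord: assumes b: "b \<in> II"
  shows "A b i = (if k \<noteq> GL \<and> b = qq then
            (if k = B then ind (i = qq) else if k = C then 2 * ind (i = qq)
             else ind (i = qq - 1) + ind (i = qq))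
          else ind (i = b) - ind (i = Suc b))"
proof (cases "k \<noteq> GL \<and> b = qq")
  case True
  have q1: "qq \<in> CO" using True nn_pos by (auto simp: osp_CO)
  have q2: "qq - 1 \<in> CO" if kD: "k = D"
  proof -
    have ng: "k \<noteq> GL" using kD by simp
    show ?thesis using nnD[OF kD] unfolding osp_CO[OF ng] by auto
  qed
  show ?thesis
  proof (cases k)
    case GL then show ?thesis using True by simp
  next
    case B
    have "A b = unitv qq" using True simple_B[OF B] zeta_CO[OF q1] by simp
    then show ?thesis using True B by (simp add: unitv_apply ind_def)
  next
    case C
    have "A b = vsmul 2 (unitv qq)" using True simple_C[OF C] zeta_CO[OF q1] by simp
    then show ?thesis using True C by (simp add: unitv_apply ind_def vapp)
  next
    case D
    have "A b = vadd (unitv (qq - 1)) (unitv qq)" using True simple_D[OF D] zeta_CO[OF q1] zeta_CO[OF q2[OF D]] by simp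
    then show ?thesis using True D by (simp add: unitv_apply ind_def vapp)
  qed
next
  case False
  have "A b = vsub (unitv b) (unitv (Suc b))" using simple_gen[OF b False] zeta_CO by metis
  then show ?thesis using False by (subst if_not_P) (simp_all add: unitv_apply ind_def vapp)
qed

definition psum :: "nat \<Rightarrow> (nat \<Rightarrow> real) \<Rightarrow> real" where
  "psum c x = (\<Sum>i\<in>{1..c}. x i)"

definition bd :: "nat \<Rightarrow> nat" where "bd c = (if k = D \<and> c = qq then qq - 1 else c)"
definition al :: "nat \<Rightarrow> real" where
  "al c = (if (k = D \<and> qq - 1 \<le> c) \<or> (k = C \<and> c = qq) then 1/2 else 1)"
definition be :: "nat \<Rightarrow> real" where
  "be c = (if k = D \<and> c = qq - 1 then -1/2 else if k = D \<and> c = qq then 1/2 else 0)"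
definition phi :: "nat \<Rightarrow> (nat \<Rightarrow> real) \<Rightarrow> real" where
  "phi c x = al c * psum (bd c) x + be c * x qq"

lemma phi_lc: "phi c (vsum (\<lambda>b. vsmul (f b) (v b)) X) = (\<Sum>b\<in>X. f b * phi c (v b))"
proof -
  have p: "psum d (vsum (\<lambda>b. vsmul (f b) (v b)) X) = (\<Sum>b\<in>X. f b * psum d (v b))" for d
    unfolding psum_def vsum_apply vsmul_apply
    by (simp add: sum_distrib_left sum.swap[of _ X])
  show ?thesis unfolding phi_def p
    by (simp add: vapp sum_distrib_left sum.distrib algebra_simps)
qed

lemma psum_ind: "finite X \<Longrightarrow> (\<Sum>i\<in>X. ind (i = j)) = ind (j \<in> X)"
  by (simp add: ind_def sum.delta')

lemma psum_simple: assumes b: "b \<in> II"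
  shows "psum d (A b) = (if k \<noteq> GL \<and> b = qq then
            (if k = B then ind (qq \<le> d) else if k = C then 2 * ind (qq \<le> d)
             else ind (qq - 1 \<le> d) + ind (qq \<le> d))
          else ind (b \<le> d) - ind (Suc b \<le> d))"
proof -
  have b1: "1 \<le> b" using II_sub b by auto
  have q1: "k \<noteq> GL \<Longrightarrow> 1 \<le> qq" "k \<noteq> GL \<Longrightarrow> k \<noteq> B \<Longrightarrow> k \<noteq> C \<Longrightarrow> 2 \<le> qq"
    using nn_pos nnD by (auto, cases k, auto)
  have q3: "k \<noteq> GL \<Longrightarrow> k \<noteq> B \<Longrightarrow> k \<noteq> C \<Longrightarrow> Suc 0 \<le> qq - Suc 0" using q1 by auto
  show ?thesis unfolding psum_def simple_coord[OF b]
    using b1 q1 q3 by (auto simp: sum.distrib sum_subtractf psum_ind sum_distrib_left[symmetric])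
qed

lemma phi_simple: assumes b: "b \<in> II" and c: "c \<in> II"
  shows "phi c (A b) = ind (b = c)"
proof -
  have b1: "1 \<le> b" "1 \<le> c" using II_sub b c by auto
  have osp: "k \<noteq> GL \<Longrightarrow> b \<le> qq \<and> c \<le> qq" using b c osp_II by auto
  have q1: "1 \<le> qq" "k = D \<Longrightarrow> 2 \<le> qq" using nn_pos nnD by auto
  show ?thesis unfolding phi_def psum_simple[OF b] simple_coord[OF b] al_def be_def bd_def
    using b1 osp q1 by (cases k) (auto simp: ind_def)
qed

lemma LI: assumes c: "c \<in> II" and S: "S \<subseteq> II" and ac: "A c \<in> gsp A S" shows "c \<in> S"
proof (rule ccontr)
  assume cS: "c \<notin> S"
  obtain f where f: "A c = vsum (\<lambda>b. vsmul (f b) (A b)) S" using ac unfolding gsp_def by blast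
  have "phi c (A c) = 1" using phi_simple[OF c c] by (simp add: ind_def)
  moreover have "phi c (A c) = (\<Sum>b\<in>S. f b * phi c (A b))" unfolding f phi_lc ..
  moreover have "\<dots> = 0" using phi_simple c S cS by (auto simp: ind_def intro!: sum.neutral)
  ultimately show False by simp
qed

end


lemma rank_nth: fixes js :: "nat list"
  assumes s: "sorted_wrt (<) js" and i: "i < length js"
  shows "card {x \<in> set js. x < js ! i} = i"
proof -
  have d: "distinct js" using s strict_sorted_iff by blast
  have "{x \<in> set js. x < js ! i} = set (take i js)"
  proof (rule set_eqI, rule iffI)
    fix x assume "x \<in> {x \<in> set js. x < js ! i}"
    then obtain m where m: "m < length js" "x = js ! m" "js ! m < js ! i"
      by (auto simp: in_set_conv_nth)
    have "m < i"
    proof (rule ccontr)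
      assume "\<not> m < i"
      hence "m = i \<or> i < m" by auto
      thus False using m sorted_wrt_nth_less[OF s, of i m] by auto
    qed
    thus "x \<in> set (take i js)" using m by (auto simp: in_set_conv_nth)
  next
    fix x assume "x \<in> set (take i js)"
    then obtain m where m: "m < i" "x = js ! m" using i by (auto simp: in_set_conv_nth)
    show "x \<in> {x \<in> set js. x < js ! i}"
      using m i sorted_wrt_nth_less[OF s, of m i] by auto
  qed
  moreover have "card (set (take i js)) = i" using d i by (simp add: distinct_card)
  ultimately show ?thesis by simp
qed

definition rvs :: "nat set \<Rightarrow> nat \<Rightarrow> nat" where
  "rvs J j = (let js = sorted_list_of_set J in js ! (length js - 1 - card {x\<in>J. x < j}))"

lemma rvs_facts: assumes f: "finite J" and j: "j \<in> J"
  shows "rvs J j \<in> J \<and> rvs J (rvs J j) = j"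
proof -
  let ?js = "sorted_list_of_set J"
  have s: "sorted_wrt (<) ?js" by (simp add: strict_sorted_list_of_set)
  have sj: "set ?js = J" using f by simp
  obtain i where i: "i < length ?js" "?js ! i = j" using j sj by (metis in_set_conv_nth)
  have ri: "card {x\<in>J. x < j} = i" using rank_nth[OF s i(1)] i sj by simp
  have r1: "rvs J j = ?js ! (length ?js - 1 - i)" unfolding rvs_def Let_def ri ..
  have l: "length ?js - 1 - i < length ?js" using i by auto
  have in1: "rvs J j \<in> J" using r1 l sj nth_mem by metis
  have "card {x\<in>J. x < rvs J j} = length ?js - 1 - i" using rank_nth[OF s l] r1 sj by simp
  hence "rvs J (rvs J j) = ?js ! (length ?js - 1 - (length ?js - 1 - i))" unfolding rvs_def Let_def by simp
  also have "\<dots> = j" using i by (simp add: Suc_diff_le)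
  finally show ?thesis using in1 by simp
qed

lemma rvs_par: assumes f: "finite J" and j: "j \<in> J"
  and r: "rev (map g (sorted_list_of_set J)) = map g (sorted_list_of_set J)"
  shows "g (rvs J j) = g j"
proof -
  let ?js = "sorted_list_of_set J"
  have s: "sorted_wrt (<) ?js" by (simp add: strict_sorted_list_of_set)
  have sj: "set ?js = J" using f by simp
  obtain i where i: "i < length ?js" "?js ! i = j" using j sj by (metis in_set_conv_nth)
  have ri: "card {x\<in>J. x < j} = i" using rank_nth[OF s i(1)] i sj by simp
  have r1: "rvs J j = ?js ! (length ?js - 1 - i)" unfolding rvs_def Let_def ri ..
  have "rev (map g ?js) ! i = map g ?js ! i" using r by simp
  hence "g (?js ! (length ?js - Suc i)) = g (?js ! i)" using i by (simp add: rev_nth)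
  thus ?thesis using r1 i by simp
qed

lemma rvs_interval: assumes "lo \<le> j" "j \<le> hi" shows "rvs {lo..hi} j = lo + hi - j"
proof -
  have e: "sorted_list_of_set {lo..hi} = [lo..<Suc hi]"
    by (metis atLeastLessThanSuc_atLeastAtMost sorted_list_of_set_range)
  have c: "card {x \<in> {lo..hi}. x < j} = j - lo"
  proof -
    have "{x \<in> {lo..hi}. x < j} = {lo..<j}" using assms by auto
    thus ?thesis by simp
  qed
  have "rvs {lo..hi} j = [lo..<Suc hi] ! (hi - j)"
    unfolding rvs_def Let_def e c using assms by (simp add: algebra_simps)
  also have "\<dots> = lo + hi - j" using assms by (subst nth_upt) auto
  finally show ?thesis .
qed


context ctx begin

abbreviation "EE S \<equiv> dyn_edges k nn mm S"
abbreviation "CP S a \<equiv> Defs.comp k nn mm S a"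

lemma EE_iff: "(a, b) \<in> EE S \<longleftrightarrow> a \<in> S \<and> b \<in> S \<and> a \<noteq> b \<and> F (A a) (A b) \<noteq> 0"
  by (simp add: dyn_edges_def)

lemma EE_sym: "(a, b) \<in> EE S \<Longrightarrow> (b, a) \<in> EE S"
  unfolding EE_iff using form_sym[of k nn mm "A a" "A b"] by auto

lemma EE_conv: "(EE S)\<inverse> = EE S"
proof (rule set_eqI)
  fix p show "p \<in> (EE S)\<inverse> \<longleftrightarrow> p \<in> EE S" by (cases p) (auto intro: EE_sym)
qed

lemma rt_sym: assumes "(a, b) \<in> (EE S)\<^sup>*" shows "(b, a) \<in> (EE S)\<^sup>*"
proof -
  have "(b, a) \<in> ((EE S)\<inverse>)\<^sup>*" using assms by (rule rtrancl_converseI)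
  thus ?thesis unfolding EE_conv .
qed

lemma comp_iff: "b \<in> CP S a \<longleftrightarrow> b \<in> S \<and> (a, b) \<in> (EE S)\<^sup>*"
  unfolding Defs.comp_def by simp

lemma comp_self: "a \<in> S \<Longrightarrow> a \<in> CP S a" by (simp add: comp_iff)
lemma comp_sub: "CP S a \<subseteq> S" by (auto simp: comp_iff)

lemma comp_eq: assumes "b \<in> CP S a" shows "CP S b = CP S a"
proof -
  have ab: "(a, b) \<in> (EE S)\<^sup>*" using assms by (simp add: comp_iff)
  have ba: "(b, a) \<in> (EE S)\<^sup>*" using rt_sym[OF ab] .
  show ?thesis
  proof (rule set_eqI)
    fix c show "c \<in> CP S b \<longleftrightarrow> c \<in> CP S a"
      unfolding comp_iff using rtrancl_trans[OF ab, of c] rtrancl_trans[OF ba, of c] by blast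
  qed
qed

lemma comp_edge: assumes "b \<in> CP S a" "(b, c) \<in> EE S" shows "c \<in> CP S a"
proof -
  have "(a, b) \<in> (EE S)\<^sup>*" using assms(1) by (simp add: comp_iff)
  hence "(a, c) \<in> (EE S)\<^sup>*" using assms(2) by (rule rtrancl_into_rtrancl)
  moreover have "c \<in> S" using assms(2) by (simp add: EE_iff)
  ultimately show ?thesis by (simp add: comp_iff)
qed

lemma comp_orth: assumes "CP S a \<noteq> CP S a'" "b \<in> CP S a" "b' \<in> CP S a'"
  shows "F (A b) (A b') = 0"
proof (rule ccontr)
  assume nz: "F (A b) (A b') \<noteq> 0"
  have e1: "CP S b = CP S a" "CP S b' = CP S a'" using comp_eq assms by auto
  show False
  proof (cases "b = b'")
    case True then show False using e1 assms(1) by simp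
  next
    case False
    have "(b, b') \<in> EE S" using False nz assms(2,3) comp_sub by (auto simp: EE_iff)
    hence "b' \<in> CP S a" using comp_edge assms(2) by blast
    hence "CP S b' = CP S a" using comp_eq by blast
    thus False using e1 assms(1) by simp
  qed
qed

lemma finite_comp: "S \<subseteq> II \<Longrightarrow> finite (CP S a)"
  by (rule finite_subset[OF _ finite_II]) (use comp_sub in blast)

lemma kind4: "k \<noteq> GL \<Longrightarrow> k \<noteq> B \<Longrightarrow> k \<noteq> C \<Longrightarrow> k = D" by (cases k) auto


lemma osp_qq_NN: "k \<noteq> GL \<Longrightarrow> qq + 1 \<le> pr qq \<and> pr qq \<le> NN" using osp_NN nn_pos by (auto simp: pr_eq)

lemma supp_gen: assumes b: "b \<in> II" and g: "\<not> (k = B \<and> b = qq)"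
  shows "\<exists>x z. sr_supp k nn mm b = {x, z} \<and> x \<in> {1..NN} \<and> z \<in> {1..NN} \<and> A b = vsub (Z x) (Z z)"
proof (cases "k \<noteq> GL \<and> b = qq")
  case False
  have "sr_supp k nn mm b = {b, Suc b}" using False by (auto simp: sr_supp_def)
  moreover have "b \<in> {1..NN}" "Suc b \<in> {1..NN}" using II_sub[OF b] by auto
  ultimately show ?thesis using simple_gen[OF b False] by blast
next
  case True
  have ng: "k \<noteq> GL" and bq: "b = qq" using True by auto
  have q: "qq \<in> {1..NN}" "pr qq \<in> {1..NN}" using osp_qq_NN[OF ng] nn_pos by auto
  have zp: "Z (pr qq) = vneg (Z qq)" using zeta_prim[OF ng q(1)] .
  show ?thesis
  proof (cases k)
    case GL then show ?thesis using ng by simp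
  next
    case B then show ?thesis using g bq by simp
  next
    case C
    have "sr_supp k nn mm b = {qq, pr qq}" using bq C by (simp add: sr_supp_def)
    moreover have "A b = vsub (Z qq) (Z (pr qq))" using simple_C[OF C] bq zp
      by (auto simp: fun_eq_iff vapp)
    ultimately show ?thesis using q by blast
  next
    case D
    have q1: "qq - 1 \<in> {1..NN}" using nnD[OF D] osp_NN[OF ng] by auto
    have "sr_supp k nn mm b = {qq - 1, pr qq}" using bq D by (simp add: sr_supp_def)
    moreover have "A b = vsub (Z (qq - 1)) (Z (pr qq))" using simple_D[OF D] bq zp
      by (auto simp: fun_eq_iff vapp)
    ultimately show ?thesis using q q1 by blast
  qed
qed

lemma supp_range: assumes b: "b \<in> II" shows "sr_supp k nn mm b \<subseteq> {1..NN}"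
proof (cases "k \<noteq> GL \<and> b = qq")
  case False
  then show ?thesis using II_sub[OF b] by (auto simp: sr_supp_def)
next
  case True
  have ng: "k \<noteq> GL" using True by auto
  have "qq \<in> {1..NN}" "pr qq \<in> {1..NN}" "k = D \<Longrightarrow> qq - 1 \<in> {1..NN}"
    using osp_qq_NN[OF ng] nn_pos nnD osp_NN[OF ng] by auto
  then show ?thesis using True by (cases k) (auto simp: sr_supp_def)
qed

lemma coord_supp: assumes b: "b \<in> II" and nz: "A b i \<noteq> 0"
  shows "i \<in> (if k \<noteq> GL \<and> b = qq then (if k = D then {qq - 1, qq} else {qq}) else {b, Suc b})"
  using nz kind4 unfolding simple_coord[OF b] by (auto simp: ind_def split: if_splits)

lemma supp_eq_gen: "\<not> (k \<noteq> GL \<and> b = qq) \<Longrightarrow> sr_supp k nn mm b = {b, Suc b}"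
  by (auto simp: sr_supp_def)

lemma supp_eq_tail: "k \<noteq> GL \<Longrightarrow> sr_supp k nn mm qq = (if k = D then {qq - 1, pr qq} else {qq, pr qq})"
  by (cases k) (auto simp: sr_supp_def)

lemma edge_meet: assumes b: "b \<in> II" and b': "b' \<in> II" and ne: "b \<noteq> b'"
  and nz: "F (A b) (A b') \<noteq> 0"
  shows "sr_supp k nn mm b \<inter> sr_supp k nn mm b' \<noteq> {}"
proof
  assume dis: "sr_supp k nn mm b \<inter> sr_supp k nn mm b' = {}"
  have pt: "A b i = 0 \<or> A b' i = 0" for i
  proof (rule ccontr)
    assume "\<not> (A b i = 0 \<or> A b' i = 0)"
    hence i1: "i \<in> (if k \<noteq> GL \<and> b = qq then (if k = D then {qq - 1, qq} else {qq}) else {b, Suc b})"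
      and i2: "i \<in> (if k \<noteq> GL \<and> b' = qq then (if k = D then {qq - 1, qq} else {qq}) else {b', Suc b'})"
      using coord_supp b b' by auto
    show False
    proof (cases "k \<noteq> GL \<and> b = qq")
      case T1: True
      have ng: "k \<noteq> GL" using T1 by auto
      have nb': "\<not> (k \<noteq> GL \<and> b' = qq)" using T1 ne by auto
      have b'q: "b' < qq" using b' ne T1 osp_II[OF ng] by auto
      have s1: "sr_supp k nn mm b = (if k = D then {qq - 1, pr qq} else {qq, pr qq})"
        using T1 supp_eq_tail[OF ng] by simp
      have s2: "sr_supp k nn mm b' = {b', Suc b'}" using supp_eq_gen[OF nb'] .
      show False using dis i1 i2 T1 nb' s1 s2 b'q by (auto split: if_splits)
    next
      case F1: False
      have s1: "sr_supp k nn mm b = {b, Suc b}" using supp_eq_gen[OF F1] .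
      show False
      proof (cases "k \<noteq> GL \<and> b' = qq")
        case T2: True
        have ng: "k \<noteq> GL" using T2 by auto
        have bq: "b < qq" using b ne T2 osp_II[OF ng] by auto
        have s2: "sr_supp k nn mm b' = (if k = D then {qq - 1, pr qq} else {qq, pr qq})"
          using T2 supp_eq_tail[OF ng] by simp
        show False using dis i1 i2 F1 T2 s1 s2 bq by (auto split: if_splits)
      next
        case F2: False
        have s2: "sr_supp k nn mm b' = {b', Suc b'}" using supp_eq_gen[OF F2] .
        show False using dis i1 i2 F1 F2 s1 s2 by (auto split: if_splits)
      qed
    qed
  qed
  have "F (A b) (A b') = 0" unfolding form_sg
    by (rule sum.neutral) (metis mult_zero_left mult_zero_right pt)
  thus False using nz by simp
qed

definition hh :: "nat \<Rightarrow> nat" where "hh b = (if k = D \<and> b = qq then qq - 1 else b)"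

lemma edge_hh: assumes b: "b \<in> II" and c: "c \<in> II" and ne: "b \<noteq> c"
  and nz: "F (A b) (A c) \<noteq> 0"
  shows "hh c \<le> hh b + 1"
proof -
  have m: "sr_supp k nn mm b \<inter> sr_supp k nn mm c \<noteq> {}" using edge_meet[OF b c ne nz] .
  show ?thesis
  proof (cases "k \<noteq> GL \<and> b = qq")
    case T1: True
    have ng: "k \<noteq> GL" using T1 by auto
    have nc: "\<not> (k \<noteq> GL \<and> c = qq)" using T1 ne by auto
    have cq: "c < qq" using c ne T1 osp_II[OF ng] by auto
    have p: "qq + 1 \<le> pr qq" using osp_qq_NN[OF ng] by auto
    have s1: "sr_supp k nn mm b = (if k = D then {qq - 1, pr qq} else {qq, pr qq})"
      using T1 supp_eq_tail[OF ng] by simp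
    have s2: "sr_supp k nn mm c = {c, Suc c}" using supp_eq_gen[OF nc] .
    show ?thesis using m s1 s2 cq p T1 unfolding hh_def by (auto split: if_splits)
  next
    case F1: False
    have s1: "sr_supp k nn mm b = {b, Suc b}" using supp_eq_gen[OF F1] .
    show ?thesis
    proof (cases "k \<noteq> GL \<and> c = qq")
      case T2: True
      have ng: "k \<noteq> GL" using T2 by auto
      have bq: "b < qq" using b ne T2 osp_II[OF ng] by auto
      have p: "qq + 1 \<le> pr qq" using osp_qq_NN[OF ng] by auto
      have s2: "sr_supp k nn mm c = (if k = D then {qq - 1, pr qq} else {qq, pr qq})"
        using T2 supp_eq_tail[OF ng] by simp
      show ?thesis using m s1 s2 bq p T2 F1 unfolding hh_def by (auto split: if_splits)
    next
      case F2: False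
      have s2: "sr_supp k nn mm c = {c, Suc c}" using supp_eq_gen[OF F2] .
      have "b \<noteq> qq \<or> k = GL" "c \<noteq> qq \<or> k = GL" using F1 F2 by auto
      hence "hh b = b" "hh c = c" unfolding hh_def by auto
      then show ?thesis using m s1 s2 by auto
    qed
  qed
qed

lemma ivt: assumes SI: "S \<subseteq> II" and p: "(a, b) \<in> (EE S)\<^sup>*" and a: "a \<in> S"
  shows "hh a \<le> v \<Longrightarrow> v \<le> hh b \<Longrightarrow> \<exists>c. c \<in> CP S a \<and> hh c = v"
  using p
proof (induction b arbitrary: v rule: rtrancl_induct)
  case base
  then show ?case using comp_self[OF a] by (intro exI[of _ a]) auto
next
  case (step b b')
  show ?case
  proof (cases "v \<le> hh b")
    case True then show ?thesis using step by blast
  next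
    case False
    have e: "b \<in> S" "b' \<in> S" "b \<noteq> b'" "F (A b) (A b') \<noteq> 0" using step(2) by (auto simp: EE_iff)
    have "hh b' \<le> hh b + 1" using edge_hh e SI by blast
    hence "v = hh b'" using False step by auto
    moreover have "b' \<in> CP S a" using step(1,2) e by (auto simp: comp_iff)
    ultimately show ?thesis by blast
  qed
qed

end


context ctx begin

lemma wperm_eq: "wperm k nn mm X j = (if j \<in> jset k nn mm X then rvs (jset k nn mm X) j
   else if k \<noteq> GL \<and> pr j \<in> jset k nn mm X then pr (rvs (jset k nn mm X) (pr j)) else j)"
  unfolding wperm_def rvs_def jlist_def Let_def ..

lemma osp_comp_iff: "osp_comp k nn mm X \<longleftrightarrow> (k = D \<and> qq - 1 \<in> X \<and> qq \<in> X) \<or> ((k = B \<or> k = C) \<and> qq \<in> X)"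
  by (cases k) (auto simp: osp_comp_def)

lemma vsub_Z_self: "vsub (Z x) (Z x) = vzero" by (rule ext) (simp add: vapp)

lemma supp_pair: assumes c: "c \<in> X" "X \<subseteq> II" "finite X" and g: "\<not> (k = B \<and> c = qq)"
  and y: "y \<in> sr_supp k nn mm c" and u: "u \<in> sr_supp k nn mm c"
  shows "vsub (Z y) (Z u) \<in> gsp A X"
proof -
  have cI: "c \<in> II" using c by blast
  obtain x z where xz1: "sr_supp k nn mm c = {x, z}" and xz2: "A c = vsub (Z x) (Z z)"
    using supp_gen[OF cI g] by blast
  have m: "vsub (Z x) (Z z) \<in> gsp A X" unfolding xz2[symmetric] by (rule gsp_mem[OF c(3) c(1)])
  have e: "vsub (Z z) (Z x) = vneg (vsub (Z x) (Z z))" by (rule ext) (simp add: vapp)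
  have m2: "vsub (Z z) (Z x) \<in> gsp A X" unfolding e by (rule gsp_neg[OF m])
  have m0: "vsub (Z u) (Z u) \<in> gsp A X" unfolding vsub_Z_self by (rule gsp_zero)
  have yy: "y = x \<or> y = z" and uu: "u = x \<or> u = z" using y u xz1 by auto
  show ?thesis
  proof (cases "y = u")
    case True then show ?thesis using m0 by simp
  next
    case False
    hence "(y = x \<and> u = z) \<or> (y = z \<and> u = x)" using yy uu by blast
    thus ?thesis using m m2 by blast
  qed
qed

lemma vsub_trans: "vsub (Z y) (Z w) = vadd (vsub (Z y) (Z u)) (vsub (Z u) (Z w))"
  by (rule ext) (simp add: vapp)

context
  fixes S a
  assumes SI: "S \<subseteq> II" and aS: "a \<in> S" and nosp: "\<not> osp_comp k nn mm (CP S a)"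
begin

abbreviation "XX \<equiv> CP S a"
abbreviation "JJ \<equiv> jset k nn mm XX"

lemma XX_sub: "XX \<subseteq> II" using comp_sub SI by blast
lemma XX_fin: "finite XX" using finite_comp SI by blast

lemma tA_good: "b \<in> XX \<Longrightarrow> \<not> (k = B \<and> b = qq)" using nosp by (auto simp: osp_comp_iff)

lemma JJ_eq: "JJ = (\<Union>b\<in>XX. sr_supp k nn mm b)" using nosp by (simp add: jset_def)

lemma tA_conn0: assumes p: "(a, b) \<in> (EE S)\<^sup>*"
  shows "\<forall>y\<in>sr_supp k nn mm b. \<forall>w\<in>sr_supp k nn mm a. vsub (Z y) (Z w) \<in> gsp A XX"
  using p
proof (induction b rule: rtrancl_induct)
  case base
  show ?case using supp_pair[OF comp_self[OF aS] XX_sub XX_fin tA_good[OF comp_self[OF aS]]] by blast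
next
  case (step b c)
  have e: "b \<in> S" "c \<in> S" "b \<noteq> c" "F (A b) (A c) \<noteq> 0" using step(2) by (auto simp: EE_iff)
  have bI: "b \<in> II" "c \<in> II" using e SI by auto
  obtain u where u: "u \<in> sr_supp k nn mm b" "u \<in> sr_supp k nn mm c" using edge_meet[OF bI e(3,4)] by blast
  have cX: "c \<in> XX" using step(1,2) e by (auto simp: comp_iff)
  show ?case
  proof (intro ballI)
    fix y w assume y: "y \<in> sr_supp k nn mm c" and w: "w \<in> sr_supp k nn mm a"
    have 1: "vsub (Z y) (Z u) \<in> gsp A XX" using supp_pair[OF cX XX_sub XX_fin tA_good[OF cX] y u(2)] .
    have 2: "vsub (Z u) (Z w) \<in> gsp A XX" using step.IH u(1) w by blast
    show "vsub (Z y) (Z w) \<in> gsp A XX" unfolding vsub_trans[of y w u] by (rule gsp_add[OF 1 2])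
  qed
qed

lemma tA_conn: assumes i: "i \<in> JJ" and j: "j \<in> JJ" shows "vsub (Z i) (Z j) \<in> gsp A XX"
proof -
  obtain b where b: "b \<in> XX" "i \<in> sr_supp k nn mm b" using i JJ_eq by blast
  obtain b' where b': "b' \<in> XX" "j \<in> sr_supp k nn mm b'" using j JJ_eq by blast
  obtain x z where xz: "sr_supp k nn mm a = {x, z}"
    using supp_gen[OF _ tA_good[OF comp_self[OF aS]]] SI aS by blast
  have w: "x \<in> sr_supp k nn mm a" using xz by auto
  have 1: "vsub (Z i) (Z x) \<in> gsp A XX" using tA_conn0 b w by (auto simp: comp_iff)
  have 2: "vsub (Z j) (Z x) \<in> gsp A XX" using tA_conn0 b' w by (auto simp: comp_iff)
  have e: "vsub (Z i) (Z j) = vsub (vsub (Z i) (Z x)) (vsub (Z j) (Z x))" by (rule ext) (simp add: vapp)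
  show ?thesis unfolding e by (rule gsp_sub[OF 1 2])
qed

lemma JJ_range: "JJ \<subseteq> {1..NN}"
proof
  fix j assume "j \<in> JJ"
  then obtain b where "b \<in> XX" "j \<in> sr_supp k nn mm b" using JJ_eq by blast
  thus "j \<in> {1..NN}" using supp_range XX_sub by blast
qed

lemma JJ_fin: "finite JJ"
  by (rule finite_subset[OF JJ_range]) simp

lemma JJ_shape: assumes j: "j \<in> JJ" and ng: "k \<noteq> GL"
  shows "j \<le> qq \<or> (k = D \<and> qq \<in> XX \<and> j = pr qq)"
proof -
  obtain b where b: "b \<in> XX" "j \<in> sr_supp k nn mm b" using j JJ_eq by blast
  have bq: "b \<le> qq" using b XX_sub osp_II[OF ng] by auto
  show ?thesis
  proof (cases "b = qq")
    case False
    then show ?thesis using b bq supp_eq_gen[of b] by auto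
  next
    case True
    have "k \<noteq> B" "k \<noteq> C" using True b nosp by (auto simp: osp_comp_iff)
    hence kD: "k = D" using kind4 ng by blast
    then show ?thesis using b True supp_eq_tail[OF ng] by auto
  qed
qed

lemma JJ_disj: assumes ng: "k \<noteq> GL" and j: "j \<in> JJ" shows "pr j \<notin> JJ"
proof
  assume pj: "pr j \<in> JJ"
  have jr: "j \<in> {1..NN}" using j JJ_range by auto
  have n: "2*qq \<le> NN" using osp_NN[OF ng] by auto
  have qqJ: "qq \<in> JJ \<and> k = D \<and> qq \<in> XX"
  proof (cases "j \<le> qq")
    case True
    have "\<not> pr j \<le> qq" using True n jr by (auto simp: pr_eq)
    hence "k = D \<and> qq \<in> XX \<and> pr j = pr qq" using JJ_shape[OF pj ng] by auto
    moreover hence "j = qq" using pr_inj jr nn_pos n by auto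
    ultimately show ?thesis using j by auto
  next
    case False
    hence "k = D \<and> qq \<in> XX \<and> j = pr qq" using JJ_shape[OF j ng] by auto
    moreover hence "pr j = qq" using pr_pr nn_pos n by auto
    ultimately show ?thesis using pj by auto
  qed
  then obtain b where b: "b \<in> XX" "qq \<in> sr_supp k nn mm b" using JJ_eq by blast
  have bq: "b \<le> qq" using b XX_sub osp_II[OF ng] by auto
  have pq: "qq + 1 \<le> pr qq" using osp_qq_NN[OF ng] by auto
  have "b \<noteq> qq"
  proof
    assume "b = qq"
    hence "qq \<in> {qq - 1, pr qq}" using b qqJ supp_eq_tail[OF ng] by auto
    thus False using pq nn_pos by auto
  qed
  hence "qq \<in> {b, Suc b}" using b supp_eq_gen[of b] by auto
  hence "b = qq - 1" using \<open>b \<noteq> qq\<close> by auto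
  hence "qq - 1 \<in> XX" using b by simp
  hence "osp_comp k nn mm XX" unfolding osp_comp_iff using qqJ by blast
  thus False using nosp by blast
qed

lemma JJ_par: assumes adm: "admissible k nn mm S" and j: "j \<in> JJ" shows "od (rvs JJ j) = od j"
proof -
  have "rev (par_seq k nn mm XX) = par_seq k nn mm XX"
    using adm aS unfolding admissible_def Let_def by blast
  hence "rev (map od (sorted_list_of_set JJ)) = map od (sorted_list_of_set JJ)"
    by (simp add: par_seq_def jlist_def)
  thus ?thesis using rvs_par[OF JJ_fin j] by blast
qed

lemma tA_goodp: assumes adm: "admissible k nn mm S" shows "goodp (wperm k nn mm XX)"
proof -
  let ?r = "rvs JJ"
  have rv: "\<And>j. j \<in> JJ \<Longrightarrow> ?r j \<in> JJ \<and> ?r (?r j) = j" using rvs_facts[OF JJ_fin] by blast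
  have par: "\<And>j. j \<in> JJ \<Longrightarrow> od (?r j) = od j" using JJ_par[OF adm] by blast
  have rng: "\<And>j. j \<in> JJ \<Longrightarrow> j \<in> {1..NN}" using JJ_range by auto
  have W: "\<And>j. wperm k nn mm XX j = (if j \<in> JJ then ?r j else if k \<noteq> GL \<and> pr j \<in> JJ then pr (?r (pr j)) else j)"
    by (rule wperm_eq)
  have main: "wperm k nn mm XX j \<in> {1..NN} \<and> wperm k nn mm XX (wperm k nn mm XX j) = j \<and>
      od (wperm k nn mm XX j) = od j \<and> (k \<noteq> GL \<longrightarrow> wperm k nn mm XX (pr j) = pr (wperm k nn mm XX j))"
    if j: "j \<in> {1..NN}" for j
  proof (cases "j \<in> JJ")
    case True
    have "k \<noteq> GL \<longrightarrow> wperm k nn mm XX (pr j) = pr (wperm k nn mm XX j)"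
    proof
      assume ng: "k \<noteq> GL"
      have "pr j \<notin> JJ" using JJ_disj[OF ng True] .
      moreover have "pr (pr j) = j" using pr_pr j by blast
      ultimately show "wperm k nn mm XX (pr j) = pr (wperm k nn mm XX j)" using True ng W by simp
    qed
    then show ?thesis using True W rv par rng by auto
  next
    case nJ: False
    show ?thesis
    proof (cases "k \<noteq> GL \<and> pr j \<in> JJ")
      case True
      have ng: "k \<noteq> GL" and pj: "pr j \<in> JJ" using True by auto
      define y where "y = pr (?r (pr j))"
      have rpj: "?r (pr j) \<in> JJ" using rv pj by blast
      have ynJ: "y \<notin> JJ" using JJ_disj[OF ng rpj] y_def by simp
      have ry: "?r (pr j) \<in> {1..NN}" using rng rpj by blast
      have py: "pr y = ?r (pr j)" using pr_pr[OF ry] y_def by simp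
      have wy: "wperm k nn mm XX j = y" using W nJ True y_def by simp
      have wy2: "wperm k nn mm XX y = j"
        using W ynJ ng py rv pj pr_pr[OF j] y_def by (simp add: rpj)
      have yr: "y \<in> {1..NN}" using pr_range[OF ry] y_def by simp
      have od: "od y = od j" using od_pr[OF ry] par[OF pj] od_pr[OF j] y_def by simp
      have pc: "wperm k nn mm XX (pr j) = pr (wperm k nn mm XX j)"
        using W pj wy py by simp
      show ?thesis using wy wy2 yr od pc by simp
    next
      case False
      have wj: "wperm k nn mm XX j = j" by (simp only: W[of j] if_not_P[OF nJ] if_not_P[OF False])
      have "k \<noteq> GL \<longrightarrow> wperm k nn mm XX (pr j) = pr j"
      proof
        assume ng: "k \<noteq> GL"
        have pj: "pr j \<notin> JJ" using False ng by auto
        have "pr (pr j) = j" using pr_pr j by blast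
        thus "wperm k nn mm XX (pr j) = pr j" using W pj nJ by simp
      qed
      then show ?thesis using wj j by simp
    qed
  qed
  show ?thesis unfolding goodp_def using main by blast
qed

lemma tA_d: assumes j: "j \<in> CO" shows "vsub (Z (wperm k nn mm XX j)) (Z j) \<in> gsp A XX"
proof -
  let ?r = "rvs JJ"
  have rv: "\<And>j. j \<in> JJ \<Longrightarrow> ?r j \<in> JJ \<and> ?r (?r j) = j" using rvs_facts[OF JJ_fin] by blast
  have rng: "\<And>j. j \<in> JJ \<Longrightarrow> j \<in> {1..NN}" using JJ_range by auto
  have W: "wperm k nn mm XX j = (if j \<in> JJ then ?r j else if k \<noteq> GL \<and> pr j \<in> JJ then pr (?r (pr j)) else j)"
    by (rule wperm_eq)
  have jr: "j \<in> {1..NN}" using j CO_sub by auto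
  show ?thesis
  proof (cases "j \<in> JJ")
    case True then show ?thesis using W tA_conn rv by simp
  next
    case nJ: False
    show ?thesis
    proof (cases "k \<noteq> GL \<and> pr j \<in> JJ")
      case True
      have ng: "k \<noteq> GL" and pj: "pr j \<in> JJ" using True by auto
      have rpj: "?r (pr j) \<in> JJ" using rv pj by blast
      have e1: "Z (pr (?r (pr j))) = vneg (Z (?r (pr j)))" using zeta_prim[OF ng rng[OF rpj]] .
      have e2: "Z j = vneg (Z (pr j))" using zeta_prim[OF ng pr_range[OF jr]] pr_pr[OF jr] by simp
      have "vsub (Z (wperm k nn mm XX j)) (Z j) = vneg (vsub (Z (?r (pr j))) (Z (pr j)))"
        using W nJ True e1 e2 by (auto simp: fun_eq_iff vapp)
      then show ?thesis using gsp_neg[OF tA_conn[OF rpj pj]] by simp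
    next
      case False
      have "wperm k nn mm XX j = j" by (simp only: W if_not_P[OF nJ] if_not_P[OF False])
      then show ?thesis using vsub_Z_self gsp_zero by simp
    qed
  qed
qed

end

end


context ctx begin

context
  fixes S a
  assumes SI: "S \<subseteq> II" and aS: "a \<in> S" and osp: "osp_comp k nn mm (CP S a)"
begin

abbreviation "YY \<equiv> CP S a"
abbreviation "lo \<equiv> Min YY"

lemma YY_fin: "finite YY" using finite_comp SI by blast
lemma YY_ne: "YY \<noteq> {}" using comp_self[OF aS] by blast
lemma lo_in: "lo \<in> YY" using Min_in[OF YY_fin YY_ne] .
lemma YY_sub: "YY \<subseteq> II" using comp_sub SI by blast
lemma osp_disj: "(k = D \<and> qq - 1 \<in> YY \<and> qq \<in> YY) \<or> ((k = B \<or> k = C) \<and> qq \<in> YY)"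
  using osp osp_comp_iff by blast
lemma q1Y_D: "k = D \<Longrightarrow> qq - 1 \<in> YY" using osp_disj by auto
lemma ng: "k \<noteq> GL" using osp by (auto simp: osp_comp_iff)
lemma qqY: "qq \<in> YY" using osp by (auto simp: osp_comp_iff)
lemma lo_ge: "1 \<le> lo" using lo_in YY_sub osp_II[OF ng] by auto
lemma lo_le: "lo \<le> qq" using Min_le[OF YY_fin qqY] .
lemma lo_le_Y: "b \<in> YY \<Longrightarrow> lo \<le> b" using Min_le[OF YY_fin] by blast

lemma osp_int: assumes v1: "lo \<le> v" and v2: "v \<le> qq" shows "v \<in> YY"
proof -
  have CPlo: "CP S lo = YY" using comp_eq[OF lo_in] .
  have loS: "lo \<in> S" using lo_in comp_sub by blast
  show ?thesis
  proof (cases "k = D")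
    case kD: True
    have q2: "2 \<le> qq" using nnD[OF kD] by simp
    have q1Y: "qq - 1 \<in> YY" using q1Y_D[OF kD] .
    show ?thesis
    proof (cases "v = qq")
      case True then show ?thesis using qqY by simp
    next
      case False
      have vq: "v \<le> qq - 1" using False v2 by simp
      have lq: "lo \<le> qq - 1" using lo_le_Y[OF q1Y] .
      have "qq - 1 \<in> CP S lo" using q1Y CPlo by simp
      hence p: "(lo, qq - 1) \<in> (EE S)\<^sup>*" using comp_iff by blast
      have "lo \<noteq> qq" using lq q2 by arith
      hence hlo: "hh lo = lo" by (simp add: hh_def)
      have hq: "hh (qq - 1) = qq - 1" using q2 by (simp add: hh_def)
      obtain c where c: "c \<in> CP S lo" "hh c = v" using ivt[OF SI p loS, of v] hlo hq v1 vq by auto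
      show ?thesis
      proof (cases "c = qq")
        case True
        have "hh qq = qq - 1" unfolding hh_def using kD by simp
        hence "v = qq - 1" using c True by simp
        then show ?thesis using q1Y by simp
      next
        case False
        hence "c = v" using c by (simp add: hh_def)
        then show ?thesis using c CPlo by simp
      qed
    qed
  next
    case nD: False
    have hid: "\<And>b. hh b = b" using nD by (simp add: hh_def)
    have "qq \<in> CP S lo" using qqY CPlo by simp
    hence p: "(lo, qq) \<in> (EE S)\<^sup>*" using comp_iff by blast
    obtain c where c: "c \<in> CP S lo" "hh c = v" using ivt[OF SI p loS, of v] hid v1 v2 by auto
    then show ?thesis using hid CPlo by simp
  qed
qed

abbreviation "JO \<equiv> jset k nn mm YY"
lemma JO_eq: "JO = {lo..pr lo}" using osp by (simp add: jset_def)

lemma lo_pr: "qq < pr lo" "pr lo \<le> NN" using lo_ge lo_le osp_NN[OF ng] nn_pos by (auto simp: pr_eq)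

lemma wperm_osp: assumes j: "j \<in> {1..NN}"
  shows "wperm k nn mm YY j = (if lo \<le> j \<and> j \<le> pr lo then pr j else j)"
proof (cases "lo \<le> j \<and> j \<le> pr lo")
  case True
  have "rvs JO j = lo + pr lo - j" unfolding JO_eq using rvs_interval True by blast
  also have "\<dots> = pr j" using True lo_pr lo_ge by (auto simp: pr_eq)
  finally show ?thesis using True unfolding wperm_eq[of YY j] JO_eq by simp
next
  case False
  have "\<not> (lo \<le> pr j \<and> pr j \<le> pr lo)" using False j lo_pr lo_ge by (auto simp: pr_eq)
  hence n2: "\<not> (k \<noteq> GL \<and> pr j \<in> JO)" unfolding JO_eq by simp
  have n1: "j \<notin> JO" using False unfolding JO_eq by simp
  show ?thesis by (simp only: wperm_eq[of YY j] if_not_P[OF n1] if_not_P[OF n2] if_not_P[OF False])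
qed

lemma osp_Z: assumes "lo \<le> c" "c \<le> qq" shows "Z c \<in> gsp A YY"
proof -
  have fY: "finite YY" by (rule YY_fin)
  have base: "Z qq \<in> gsp A YY"
  proof (cases k)
    case GL then show ?thesis using ng by simp
  next
    case B
    have "A qq \<in> gsp A YY" using gsp_mem[OF fY qqY] .
    then show ?thesis using simple_B[OF B] by simp
  next
    case C
    have "vsmul (1/2) (A qq) \<in> gsp A YY" using gsp_smul gsp_mem[OF fY qqY] by blast
    moreover have "vsmul (1/2) (A qq) = Z qq" unfolding simple_C[OF C] by (rule ext) (simp add: vapp)
    ultimately show ?thesis by simp
  next
    case D
    have q2: "2 \<le> qq" using nnD[OF D] by simp
    have q1Y: "qq - 1 \<in> YY" using q1Y_D[OF D] .
    have qI: "qq - 1 \<in> II" using q1Y YY_sub by blast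
    have "qq - 1 \<noteq> qq" using q2 by arith
    hence nt: "\<not> (k \<noteq> GL \<and> qq - 1 = qq)" by blast
    have sq: "Suc (qq - 1) = qq" using q2 by arith
    have a1: "A (qq - 1) = vsub (Z (qq - 1)) (Z qq)" using simple_gen[OF qI nt] unfolding sq by simp
    have "vsmul (1/2) (vsub (A qq) (A (qq - 1))) \<in> gsp A YY"
      using gsp_smul gsp_sub gsp_mem[OF fY qqY] gsp_mem[OF fY q1Y] by blast
    moreover have "vsmul (1/2) (vsub (A qq) (A (qq - 1))) = Z qq"
      unfolding simple_D[OF D] a1 by (rule ext) (simp add: vapp)
    ultimately show ?thesis by simp
  qed
  have step: "Z (qq - d) \<in> gsp A YY" if "d \<le> qq - lo" for d
    using that
  proof (induction d)
    case 0 then show ?case using base by simp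
  next
    case (Suc d)
    define c where "c = qq - Suc d"
    have cq: "c < qq" "lo \<le> c" using Suc.prems lo_le lo_ge unfolding c_def by auto
    have cY: "c \<in> YY" using osp_int cq by simp
    have cI: "c \<in> II" using cY YY_sub by blast
    have nt: "\<not> (k \<noteq> GL \<and> c = qq)" using cq by simp
    have ac: "A c = vsub (Z c) (Z (Suc c))" using simple_gen[OF cI nt] by simp
    have sc: "Suc c = qq - d" using cq Suc.prems unfolding c_def by auto
    have "Z c = vadd (A c) (Z (Suc c))" unfolding ac by (rule ext) (simp add: vapp)
    moreover have "A c \<in> gsp A YY" using gsp_mem[OF fY cY] .
    moreover have "Z (Suc c) \<in> gsp A YY" using Suc sc by simp
    ultimately show ?case using gsp_add c_def by metis
  qed
  have l: "qq - c \<le> qq - lo" using assms by arith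
  have "Z (qq - (qq - c)) \<in> gsp A YY" using step[OF l] .
  moreover have "qq - (qq - c) = c" using assms by arith
  ultimately show ?thesis by simp
qed

lemma osp_goodp: "goodp (wperm k nn mm YY)"
proof -
  have main: "wperm k nn mm YY j \<in> {1..NN} \<and> wperm k nn mm YY (wperm k nn mm YY j) = j \<and>
      od (wperm k nn mm YY j) = od j \<and> (k \<noteq> GL \<longrightarrow> wperm k nn mm YY (pr j) = pr (wperm k nn mm YY j))"
    if j: "j \<in> {1..NN}" for j
  proof -
    have pj: "pr j \<in> {1..NN}" using pr_range[OF j] .
    have ppj: "pr (pr j) = j" using pr_pr[OF j] .
    have iff: "(lo \<le> pr j \<and> pr j \<le> pr lo) \<longleftrightarrow> (lo \<le> j \<and> j \<le> pr lo)"
      using j lo_pr lo_ge by (auto simp: pr_eq)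
    show ?thesis
    proof (cases "lo \<le> j \<and> j \<le> pr lo")
      case True
      have w1: "wperm k nn mm YY j = pr j" using wperm_osp[OF j] True by simp
      have w2: "wperm k nn mm YY (pr j) = j" using wperm_osp[OF pj] iff True ppj by simp
      show ?thesis unfolding w1 w2 using pj od_pr[OF j] ppj by simp
    next
      case False
      have w1: "wperm k nn mm YY j = j" using wperm_osp[OF j] False by simp
      have w2: "wperm k nn mm YY (pr j) = pr j" using wperm_osp[OF pj] iff False by simp
      show ?thesis unfolding w1 w2 using j ppj by simp
    qed
  qed
  show ?thesis unfolding goodp_def using main by blast
qed

lemma osp_d: assumes j: "j \<in> CO" shows "vsub (Z (wperm k nn mm YY j)) (Z j) \<in> gsp A YY"
proof -
  have jr: "j \<in> {1..NN}" using j CO_sub by auto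
  have jq: "j \<le> qq" using j osp_CO[OF ng] by auto
  show ?thesis
  proof (cases "lo \<le> j")
    case True
    have jJ: "lo \<le> j \<and> j \<le> pr lo" using True jq lo_pr by auto
    have w: "wperm k nn mm YY j = pr j" using wperm_osp[OF jr] jJ by simp
    have e: "vsub (Z (pr j)) (Z j) = vsmul (-2) (Z j)"
      unfolding zeta_prim[OF ng jr] by (rule ext) (simp add: vapp)
    show ?thesis unfolding w e using gsp_smul osp_Z[OF True jq] by blast
  next
    case False
    have w: "wperm k nn mm YY j = j" using wperm_osp[OF jr] False by simp
    show ?thesis unfolding w vsub_Z_self by (rule gsp_zero)
  qed
qed

end

lemma comp_cok: assumes adm: "admissible k nn mm S" and aS: "a \<in> S"
  shows "cok (CP S a)"
proof -
  have SI: "S \<subseteq> II" using adm by (simp add: admissible_def)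
  show ?thesis
  proof (cases "osp_comp k nn mm (CP S a)")
    case True
    show ?thesis unfolding cok_def
      using YY_fin[OF SI aS True] osp_goodp[OF SI aS True] osp_d[OF SI aS True] by blast
  next
    case False
    show ?thesis unfolding cok_def
      using XX_fin[OF SI aS False] tA_goodp[OF SI aS False adm] tA_d[OF SI aS False] by blast
  qed
qed

end


context ctx begin

lemma wl_eq: "w_l k nn mm S = Wl (map (CP S) (sorted_list_of_set (comp_mins k nn mm S)))"
  unfolding w_l_def Wl_def foldr_map by (simp add: o_def)

lemma final:
  fixes S :: "nat set" and \<tau> :: "nat \<Rightarrow> nat" and T :: "(nat \<Rightarrow> real) \<Rightarrow> nat \<Rightarrow> real"
  assumes adm: "admissible k nn mm S"
    and dyn: "dynkin_aut k nn mm \<tau>"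
    and h5: "\<forall>a\<in>S. simple k nn mm (\<tau> a) = vneg (w_l k nn mm S (simple k nn mm a))"
    and h6: "\<forall>x y. T (vadd x y) = vadd (T x) (T y)"
    and h7: "\<forall>r x. T (vsmul r x) = vsmul r (T x)"
    and h8: "\<forall>a\<in>sr_idx k nn mm. T (simple k nn mm a) = simple k nn mm (\<tau> a)"
  shows "\<forall>x\<in>root_lattice k nn mm. T (w_l k nn mm S x) = w_l k nn mm S (T x)"
proof -
  have SI: "S \<subseteq> II" using adm by (simp add: admissible_def)
  have fS: "finite S" using SI finite_II finite_subset by blast
  define ms where "ms = sorted_list_of_set (comp_mins k nn mm S)"
  define cs where "cs = map (CP S) ms"
  have fm: "finite (comp_mins k nn mm S)"
    by (rule finite_subset[OF _ fS]) (auto simp: comp_mins_def)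
  have sms: "set ms = comp_mins k nn mm S" unfolding ms_def using fm by simp
  have msS: "\<And>a. a \<in> set ms \<Longrightarrow> a \<in> S" using sms by (auto simp: comp_mins_def)
  have msMin: "\<And>a. a \<in> set ms \<Longrightarrow> Min (CP S a) = a" using sms by (auto simp: comp_mins_def)
  have W: "w_l k nn mm S = Wl cs" unfolding cs_def ms_def by (rule wl_eq)
  have cok_all: "\<forall>X\<in>set cs. cok X" unfolding cs_def using comp_cok[OF adm] msS by auto
  have sub_all: "\<forall>X\<in>set cs. cok X \<and> X \<subseteq> S" using cok_all comp_sub unfolding cs_def by auto
  have inj: "inj_on (CP S) (set ms)"
  proof (rule inj_onI)
    fix a a' assume "a \<in> set ms" "a' \<in> set ms" "CP S a = CP S a'"
    thus "a = a'" using msMin by metis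
  qed
  have dist: "distinct cs" unfolding cs_def distinct_map
    using inj by (simp add: ms_def distinct_sorted_list_of_set)
  have orth_all: "\<And>X Y. X \<in> set cs \<Longrightarrow> Y \<in> set cs \<Longrightarrow> X \<noteq> Y \<Longrightarrow> orth X Y"
  proof -
    fix X Y assume "X \<in> set cs" "Y \<in> set cs" "X \<noteq> Y"
    then obtain a a' where "X = CP S a" "Y = CP S a'" "CP S a \<noteq> CP S a'" unfolding cs_def by auto
    thus "orth X Y" unfolding orth_def using comp_orth by blast
  qed
  have Tlin: "lin T" unfolding lin_def using h6 h7 by blast
  have tbij: "bij_betw \<tau> II II" using dyn by (simp add: dynkin_aut_def)
  have tform: "\<And>a b. a \<in> II \<Longrightarrow> b \<in> II \<Longrightarrow> F (A (\<tau> a)) (A (\<tau> b)) = F (A a) (A b)"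
    using dyn by (simp add: dynkin_aut_def)
  have main: "\<And>x. x \<in> gsp A II \<Longrightarrow> T (Wl cs x) = Wl cs (T x)"
  proof (rule abstract_main[OF SI tbij tform Tlin])
    show "\<And>a. a \<in> II \<Longrightarrow> T (A a) = A (\<tau> a)" using h8 by blast
    show "lin (Wl cs)" by (rule Wl_lin)
    show "\<And>x. inV x \<Longrightarrow> inV (Wl cs x)" using Wl_V cok_all by blast
    show "\<And>x. inV x \<Longrightarrow> Wl cs (Wl cs x) = x" using Wl_inv[OF cok_all dist orth_all] by blast
    show "\<And>x y. inV x \<Longrightarrow> inV y \<Longrightarrow> F (Wl cs x) (Wl cs y) = F x y" using Wl_isom cok_all by blast
    show "\<And>x. inV x \<Longrightarrow> vsub (Wl cs x) x \<in> gsp A S" using Wl_diff[OF sub_all fS] by blast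
    show "\<And>x. inV x \<Longrightarrow> (\<And>b. b \<in> S \<Longrightarrow> F x (A b) = 0) \<Longrightarrow> Wl cs x = x"
      using Wl_fix[OF sub_all] by blast
    show "\<And>a. a \<in> S \<Longrightarrow> A (\<tau> a) = vneg (Wl cs (A a))" using h5 W by simp
    show "\<And>c. c \<in> II \<Longrightarrow> A c \<in> gsp A S \<Longrightarrow> c \<in> S" using LI SI by blast
  qed
  show ?thesis
  proof
    fix x assume "x \<in> root_lattice k nn mm"
    then obtain z :: "nat \<Rightarrow> int" where z: "x = vsum (\<lambda>a. vsmul (of_int (z a)) (A a)) II"
      unfolding root_lattice_def by blast
    have "x \<in> gsp A II" unfolding z by (rule gspI) (rule refl)
    thus "T (w_l k nn mm S x) = w_l k nn mm S (T x)" using main W by simp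
  qed
qed

end

theorem mainTheorem5:
  fixes k :: kind and nn mm :: nat and S :: "nat set"
    and \<tau> :: "nat \<Rightarrow> nat" and T :: "(nat \<Rightarrow> real) \<Rightarrow> nat \<Rightarrow> real"
  assumes "valid_params k nn mm"
    and "admissible k nn mm S"
    and "even_perm k nn mm \<tau>"
    and "dynkin_aut k nn mm \<tau>"
    and "\<forall>a\<in>S. simple k nn mm (\<tau> a) = vneg (w_l k nn mm S (simple k nn mm a))"
    and "\<forall>x y. T (vadd x y) = vadd (T x) (T y)"
    and "\<forall>r x. T (vsmul r x) = vsmul r (T x)"
    and "\<forall>a\<in>sr_idx k nn mm. T (simple k nn mm a) = simple k nn mm (\<tau> a)"
    and "\<forall>a\<in>sr_idx k nn mm - S. \<forall>b\<in>S.
           form k nn mm (vadd (simple k nn mm a) (w_l k nn mm S (simple k nn mm (\<tau> a))))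
                        (simple k nn mm b) = 0"
  shows "\<forall>x\<in>root_lattice k nn mm. T (w_l k nn mm S x) = w_l k nn mm S (T x)"
proof -
  interpret ctx k nn mm using assms(1) by unfold_locales
  show ?thesis using final[OF assms(2) assms(4) assms(5) assms(6) assms(7) assms(8)] .
qed


end
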